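(* Let $K$ be an imaginary quadratic field with $\mathcal{O}_K^\times=\{\pm1\}$ (i.e. $K\neq\mathbb{Q}(\sqrt{-1}),\mathbb{Q}(\sqrt{-3})$), fix an embedding $K\hookrightarrow\mathbb{C}$, and let $C$ be a nonzero ideal of $\mathcal{O}_K$, viewed as a lattice in $\mathbb{C}$. Let $U\subseteq\mathbb{C}$ be the union of the open disks of radius $\sqrt{\mathrm{Nm}(C)}$ centered at the elements of $C$. If $\mathbb{C}\setminus U$ contains a nonempty open set, then $C$ is not a Euclidean ideal.
   Context: $\mathcal{O}_K$ is the ring of integers of $K$ and $\mathrm{Nm}(C)=|\mathcal{O}_K/C|$. Let $E$ be the set of fractional ideals of $\mathcal{O}_K$ containing $\mathcal{O}_K$. A nonzero ideal $C\subseteq\mathcal{O}_K$ is Euclidean if there exists a function $\psi:E\to\mathbb{N}$ such that for all $I\in E$ and all $x\in IC\setminus C$ there exists $y\in C$ with $\psi((x+y)^{-1}IC)<\psi(I)$. *)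

theory Defs
  imports "HOL-Analysis.Analysis" "HOL-Computational_Algebra.Polynomial"
begin

definition quad_field :: "nat \<Rightarrow> complex set" where
  "quad_field d = {of_rat a + of_rat b * (\<i> * complex_of_real (sqrt (real d))) | a b. True}"

definition algebraic_integer :: "complex \<Rightarrow> bool" where
  "algebraic_integer z \<longleftrightarrow>
     (\<exists>p :: int poly. lead_coeff p = 1 \<and> poly (map_poly of_int p) z = 0)"

definition ring_of_integers :: "complex set \<Rightarrow> complex set" where
  "ring_of_integers K = {z \<in> K. algebraic_integer z}"

definition units_of_ring :: "complex set \<Rightarrow> complex set" where
  "units_of_ring R = {u \<in> R. \<exists>v \<in> R. u * v = 1}"

definition nonzero_ideal :: "complex set \<Rightarrow> complex set \<Rightarrow> bool" where
  "nonzero_ideal R C \<longleftrightarrow> C \<subseteq> R \<and> 0 \<in> C \<and> C \<noteq> {0} \<and>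
     (\<forall>x\<in>C. \<forall>y\<in>C. x + y \<in> C) \<and> (\<forall>r\<in>R. \<forall>x\<in>C. r * x \<in> C)"

definition fractional_ideal :: "complex set \<Rightarrow> complex set \<Rightarrow> complex set \<Rightarrow> bool" where
  "fractional_ideal K R I \<longleftrightarrow> I \<subseteq> K \<and> 0 \<in> I \<and> I \<noteq> {0} \<and>
     (\<forall>x\<in>I. \<forall>y\<in>I. x + y \<in> I) \<and> (\<forall>r\<in>R. \<forall>x\<in>I. r * x \<in> I) \<and>
     (\<exists>c\<in>R. c \<noteq> 0 \<and> (\<lambda>x. c * x) ` I \<subseteq> R)"

definition frac_ideal_mult :: "complex set \<Rightarrow> complex set \<Rightarrow> complex set" where
  "frac_ideal_mult I J = {\<Sum>i<n. a i * b i | (n::nat) a b. \<forall>i<n. a i \<in> I \<and> b i \<in> J}"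

text \<open>The absolute norm Nm(C) = |R/C|.\<close>
definition ideal_norm :: "complex set \<Rightarrow> complex set \<Rightarrow> nat" where
  "ideal_norm R C = card ((\<lambda>x. (\<lambda>c. x + c) ` C) ` R)"

text \<open>Euclidean ideal (E = fractional ideals containing R).\<close>
definition euclidean_ideal :: "complex set \<Rightarrow> complex set \<Rightarrow> complex set \<Rightarrow> bool" where
  "euclidean_ideal K R C \<longleftrightarrow>
     (\<exists>\<psi> :: complex set \<Rightarrow> nat.
        \<forall>I. fractional_ideal K R I \<and> R \<subseteq> I \<longrightarrow>
          (\<forall>x \<in> frac_ideal_mult I C - C. \<exists>y \<in> C.
              \<psi> ((\<lambda>z. z / (x + y)) ` frac_ideal_mult I C) < \<psi> I))"

end

theory Submission
  imports Defs
begin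


lemma map_poly_of_int_mult: "map_poly (of_int :: int \<Rightarrow> 'a::comm_ring_1) (p * q) = map_poly of_int p * map_poly of_int q"
  by (rule poly_eqI) (simp add: coeff_map_poly coeff_mult)
lemma map_poly_of_int_add: "map_poly (of_int :: int \<Rightarrow> 'a::comm_ring_1) (p + q) = map_poly of_int p + map_poly of_int q"
  by (rule poly_eqI) (simp add: coeff_map_poly)

lemma cof_rat: "(of_rat a :: complex) = complex_of_real (of_rat a)"
  by (induct a) (simp add: of_rat_rat)

lemma Re_of_rat[simp]: "Re (of_rat a) = of_rat a" by (simp add: cof_rat)
lemma Im_of_rat[simp]: "Im (of_rat a) = 0" by (simp add: cof_rat)

lemma rat_bounded_denom_int:
  fixes q :: real and D :: int
  assumes q: "q \<in> \<rat>" and D: "D > 0" and h: "\<And>k. of_int D * q ^ k \<in> \<int>"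
  shows "q \<in> \<int>"
proof -
  obtain r where r: "q = of_rat r" using q by (auto elim: Rats_cases)
  obtain a b where ab: "quotient_of r = (a, b)" by (cases "quotient_of r")
  have b0: "b > 0" using ab quotient_of_denom_pos by blast
  have cop: "coprime a b" using ab quotient_of_coprime by blast
  have rab: "r = of_int a / of_int b" using ab quotient_of_div by blast
  have qab: "q = of_int a / of_int b" using r rab by (simp add: of_rat_divide)
  have dvd: "b ^ k dvd D" for k
  proof -
    obtain m where m: "of_int D * q ^ k = of_int m" using h[of k] by (auto elim: Ints_cases)
    have "of_int D * of_int a ^ k = (of_int m * of_int b ^ k :: real)"
      using m b0 by (simp add: qab power_divide field_simps)
    hence "D * a ^ k = m * b ^ k" by (metis of_int_eq_iff of_int_mult of_int_power)
    hence "b ^ k dvd D * a ^ k" by (metis dvd_triv_right)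
    moreover have "coprime (b ^ k) (a ^ k)" using cop by (simp add: coprime_commute)
    ultimately show ?thesis using coprime_dvd_mult_left_iff by blast
  qed
  have "b = 1"
  proof (rule ccontr)
    assume "b \<noteq> 1" hence "b \<ge> 2" using b0 by simp
    have "b ^ nat D \<le> D" using dvd[of "nat D"] D by (simp add: zdvd_imp_le)
    moreover have "2 ^ nat D \<le> b ^ nat D" using \<open>b \<ge> 2\<close> by (simp add: power_mono)
    moreover have "int (nat D) < 2 ^ nat D" by (metis of_nat_less_two_power of_nat_numeral of_nat_power)
    ultimately show False using D by simp
  qed
  thus ?thesis using qab by simp
qed

lemma rat_sq_int:
  fixes q :: real
  assumes q: "q \<in> \<rat>" and h: "q ^ 2 \<in> \<int>" shows "q \<in> \<int>"
proof -
  obtain r where r: "q = of_rat r" using q by (auto elim: Rats_cases)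
  obtain a b where ab: "quotient_of r = (a, b)" by (cases "quotient_of r")
  have b0: "b > 0" using ab quotient_of_denom_pos by blast
  have rab: "r = of_int a / of_int b" using ab quotient_of_div by blast
  have qab: "q = of_int a / of_int b" using r rab by (simp add: of_rat_divide)
  have "of_int b * q ^ k \<in> \<int>" for k
  proof -
    have "q ^ k = q ^ (2 * (k div 2) + k mod 2)" by simp
    also have "\<dots> = (q ^ 2) ^ (k div 2) * q ^ (k mod 2)"
      by (simp only: power_add power_mult)
    finally have e: "of_int b * q ^ k = (of_int b * q ^ (k mod 2)) * (q ^ 2) ^ (k div 2)" by simp
    have "of_int b * q ^ (k mod 2) \<in> \<int>"
    proof (cases "k mod 2 = 0")
      case True thus ?thesis by simp
    next
      case False hence "k mod 2 = 1" by simp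
      thus ?thesis using b0 by (simp add: qab)
    qed
    moreover have "(q^2)^(k div 2) \<in> \<int>" using h by (rule Ints_power)
    ultimately show ?thesis unfolding e by (rule Ints_mult)
  qed
  thus ?thesis using rat_bounded_denom_int[OF q b0] by blast
qed




lemma rat_denom: "(x::real) \<in> \<rat> \<Longrightarrow> \<exists>D::int. D > 0 \<and> of_int D * x \<in> \<int>"
proof -
  assume "x \<in> \<rat>"
  then obtain r where r: "x = of_rat r" by (auto elim: Rats_cases)
  obtain a b where ab: "quotient_of r = (a, b)" by (cases "quotient_of r")
  have b0: "b > 0" using ab quotient_of_denom_pos by blast
  have rab: "r = of_int a / of_int b" using ab quotient_of_div by blast
  have "of_int b * x = of_int a" using b0 by (simp add: r rab of_rat_divide)
  thus ?thesis using b0 by (intro exI[of _ b]) simp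
qed

locale qf =
  fixes d :: nat
  assumes dpos: "d > 0"
begin

abbreviation "sd \<equiv> sqrt (real d)"
definition th :: complex where "th = \<i> * complex_of_real (sqrt (real d))"
abbreviation KK where "KK \<equiv> quad_field d"
abbreviation RR where "RR \<equiv> ring_of_integers (quad_field d)"

lemma sd_pos: "sd > 0" using dpos by simp
lemma sd_sq: "sd * sd = real d" by simp
lemma Re_th[simp]: "Re th = 0" and Im_th[simp]: "Im th = sd" by (simp_all add: th_def)

lemma Im_split: "Im z = (Im z / sd) * sd" using sd_pos by simp

lemma inK_iff: "z \<in> KK \<longleftrightarrow> Re z \<in> \<rat> \<and> Im z / sd \<in> \<rat>"
proof
  assume "z \<in> KK"
  then obtain a b where z: "z = of_rat a + of_rat b * th" by (auto simp: quad_field_def th_def)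
  have "Re z = of_rat a" "Im z / sd = of_rat b" using sd_pos by (simp_all add: z cof_rat th_def)
  thus "Re z \<in> \<rat> \<and> Im z / sd \<in> \<rat>" by simp
next
  assume "Re z \<in> \<rat> \<and> Im z / sd \<in> \<rat>"
  then obtain a b where a: "Re z = of_rat a" and b: "Im z / sd = of_rat b"
    by (auto elim!: Rats_cases)
  have "z = of_rat a + of_rat b * th"
    using sd_pos a b by (intro complex_eqI) (simp_all add: cof_rat th_def field_simps)
  thus "z \<in> KK" by (auto simp: quad_field_def th_def)
qed

lemma K_add: "z \<in> KK \<Longrightarrow> w \<in> KK \<Longrightarrow> z + w \<in> KK"
  by (simp add: inK_iff add_divide_distrib)

lemma K_uminus: "z \<in> KK \<Longrightarrow> - z \<in> KK"
  by (simp add: inK_iff)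

lemma K_diff: "z \<in> KK \<Longrightarrow> w \<in> KK \<Longrightarrow> z - w \<in> KK"
  by (simp add: inK_iff diff_divide_distrib)

lemma K_cnj: "z \<in> KK \<Longrightarrow> cnj z \<in> KK"
  by (simp add: inK_iff)

lemma Im_mult_sd: "Im z * Im w = real d * (Im z / sd) * (Im w / sd)"
proof -
  have "real d * (Im z / sd) * (Im w / sd) = (sd * sd) * (Im z * Im w) / (sd * sd)"
    by (simp only: sd_sq) (simp add: field_simps)
  also have "\<dots> = Im z * Im w" using sd_pos by simp
  finally show ?thesis by simp
qed

lemma K_mult: "z \<in> KK \<Longrightarrow> w \<in> KK \<Longrightarrow> z * w \<in> KK"
proof -
  assume z: "z \<in> KK" and w: "w \<in> KK"
  have e1: "Re (z * w) = Re z * Re w - Im z * Im w" by simp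
  have eq1: "Re (z * w) = Re z * Re w - real d * (Im z / sd) * (Im w / sd)"
    by (simp only: e1 Im_mult_sd)
  have eq2: "Im (z * w) / sd = Re z * (Im w / sd) + (Im z / sd) * Re w"
    by (simp add: add_divide_distrib)
  have A: "Re (z * w) \<in> \<rat>"
    unfolding eq1 using z w unfolding inK_iff by (intro Rats_diff Rats_mult) auto
  have B: "Im (z * w) / sd \<in> \<rat>"
    unfolding eq2 using z w unfolding inK_iff by (intro Rats_add Rats_mult) auto
  show ?thesis unfolding inK_iff using A B by blast
qed

lemma K_nrm: "z \<in> KK \<Longrightarrow> cmod z ^ 2 \<in> \<rat>"
proof -
  assume z: "z \<in> KK"
  have "cmod z ^ 2 = Re z * Re z + Im z * Im z" using cmod_power2[of z] by (simp add: power2_eq_square)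
  also have "\<dots> = Re z * Re z + real d * (Im z / sd) * (Im z / sd)"
    by (simp only: Im_mult_sd)
  moreover have "Re z * Re z + real d * (Im z / sd) * (Im z / sd) \<in> \<rat>"
    using z unfolding inK_iff by (intro Rats_add Rats_mult) auto
  ultimately show ?thesis by (simp only:)
qed

lemma K_of_real: "x \<in> \<rat> \<Longrightarrow> complex_of_real x \<in> KK" by (simp add: inK_iff)

lemma K_inverse: "z \<in> KK \<Longrightarrow> inverse z \<in> KK"
proof -
  assume z: "z \<in> KK"
  have "inverse z = cnj z * complex_of_real (inverse (cmod z ^ 2))"
  proof (cases "z = 0")
    case True thus ?thesis by simp
  next
    case False
    have "z * (cnj z * complex_of_real (inverse (cmod z ^ 2)))
          = complex_of_real (cmod z ^ 2) * complex_of_real (inverse (cmod z ^ 2))"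
      by (simp only: complex_norm_square mult.assoc)
    also have "\<dots> = 1" using False by (simp del: of_real_power)
    finally show ?thesis by (rule inverse_unique)
  qed
  moreover have "complex_of_real (inverse (cmod z ^ 2)) \<in> KK"
    using K_nrm[OF z] by (intro K_of_real) simp
  ultimately show ?thesis using K_cnj[OF z] K_mult by simp
qed

lemma K_divide: "z \<in> KK \<Longrightarrow> w \<in> KK \<Longrightarrow> z / w \<in> KK"
  by (simp add: divide_inverse K_mult K_inverse)

lemma K_of_int[simp]: "of_int k \<in> KK" by (simp add: inK_iff)
lemma K_th: "th \<in> KK" using sd_pos by (simp add: inK_iff)

end



context qf begin

definition zth :: "complex \<Rightarrow> bool" where "zth z \<longleftrightarrow> Re z \<in> \<int> \<and> Im z / sd \<in> \<int>"

lemma zth_add: "zth z \<Longrightarrow> zth w \<Longrightarrow> zth (z + w)"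
  by (simp add: zth_def add_divide_distrib)

lemma zth_0: "zth 0" by (simp add: zth_def)

lemma zth_int_mult: "zth z \<Longrightarrow> zth (of_int k * z)"
proof -
  assume z: "zth z"
  have e1: "Re (of_int k * z) = of_int k * Re z" by simp
  have e2: "Im (of_int k * z) / sd = of_int k * (Im z / sd)" by simp
  show ?thesis unfolding zth_def e1 e2 using z unfolding zth_def by (intro conjI Ints_mult) auto
qed

lemma zth_nat_mult: "zth z \<Longrightarrow> zth (of_nat k * z)"
  using zth_int_mult[of z "int k"] by simp

lemma zth_sum: "(\<And>i. i \<in> A \<Longrightarrow> zth (f i)) \<Longrightarrow> zth (sum f A)"
proof (induction A rule: infinite_finite_induct)
  case (infinite A) thus ?case by (simp add: zth_0)
next
  case empty thus ?case by (simp add: zth_0)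
next
  case (insert x F) thus ?case by (simp add: zth_add)
qed

lemma zth_nrm: "zth z \<Longrightarrow> cmod z ^ 2 \<in> \<int>"
proof -
  assume z: "zth z"
  have "cmod z ^ 2 = Re z * Re z + Im z * Im z" using cmod_power2[of z] by (simp add: power2_eq_square)
  also have "\<dots> = Re z * Re z + real d * (Im z / sd) * (Im z / sd)"
    by (simp only: Im_mult_sd)
  finally have e: "cmod z ^ 2 = Re z * Re z + real d * (Im z / sd) * (Im z / sd)" .
  have "Re z * Re z + real d * (Im z / sd) * (Im z / sd) \<in> \<int>"
    using z unfolding zth_def by (intro Ints_add Ints_mult) auto
  thus ?thesis using e by (simp only:)
qed

lemma K_denom1: "z \<in> KK \<Longrightarrow> \<exists>D::int. D > 0 \<and> zth (of_int D * z)"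
proof -
  assume z: "z \<in> KK"
  obtain D1 :: int where D1: "D1 > 0" "of_int D1 * Re z \<in> \<int>"
    using rat_denom z unfolding inK_iff by blast
  obtain D2 :: int where D2: "D2 > 0" "of_int D2 * (Im z / sd) \<in> \<int>"
    using rat_denom z unfolding inK_iff by blast
  have "Re (of_int (D1 * D2) * z) = of_int D2 * (of_int D1 * Re z)" by simp
  moreover have "Im (of_int (D1 * D2) * z) / sd = of_int D1 * (of_int D2 * (Im z / sd))" by simp
  ultimately have "zth (of_int (D1 * D2) * z)"
    unfolding zth_def using D1 D2 by (metis Ints_mult Ints_of_int)
  thus ?thesis using D1 D2 by (intro exI[of _ "D1 * D2"]) simp
qed

lemma K_denom_fin: "finite F \<Longrightarrow> F \<subseteq> KK \<Longrightarrow> \<exists>D::int. D > 0 \<and> (\<forall>z\<in>F. zth (of_int D * z))"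
proof (induction F rule: finite_induct)
  case empty thus ?case by (intro exI[of _ 1]) simp
next
  case (insert x F)
  then obtain D where D: "D > 0" "\<forall>z\<in>F. zth (of_int D * z)" by auto
  have "x \<in> KK" using insert.prems by simp
  then obtain Dx where Dx: "Dx > 0" "zth (of_int Dx * x)" using K_denom1 by blast
  have "\<forall>z\<in>insert x F. zth (of_int (D * Dx) * z)"
  proof
    fix z assume "z \<in> insert x F"
    thus "zth (of_int (D * Dx) * z)"
    proof
      assume "z = x" thus ?thesis using zth_int_mult[OF Dx(2), of D] by (simp add: mult.assoc)
    next
      assume "z \<in> F" thus ?thesis using zth_int_mult[of "of_int D * z" Dx] D by (simp add: mult.commute mult.left_commute)
    qed
  qed
  thus ?case using D Dx by (intro exI[of _ "D * Dx"]) simp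
qed

lemma K_one: "1 \<in> KK" using K_of_int[of 1] by simp

lemma K_power: "z \<in> KK \<Longrightarrow> z ^ k \<in> KK"
  by (induction k) (simp_all add: K_mult K_one)

lemma poly_sum_lessThan:
  fixes h :: "'a::comm_semiring_1 poly"
  assumes "degree h < n"
  shows "poly h x = (\<Sum>i<n. coeff h i * x ^ i)"
proof -
  have "poly h x = (\<Sum>i\<le>degree h. coeff h i * x ^ i)" by (rule poly_altdef)
  also have "\<dots> = (\<Sum>i<n. coeff h i * x ^ i)"
    using assms by (intro sum.mono_neutral_left) (auto simp: coeff_eq_0)
  finally show ?thesis .
qed

lemma alg_pow:
  fixes p :: "int poly" and u :: complex
  assumes lc: "lead_coeff p = 1" and r: "poly (map_poly of_int p) u = 0"
  shows "\<exists>c. u ^ k = (\<Sum>i<degree p. of_int (c i) * u ^ i)"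
proof -
  have p0: "p \<noteq> 0" using lc by auto
  have dp: "degree p > 0"
  proof (rule ccontr)
    assume "\<not> degree p > 0"
    hence d0: "degree p = 0" by simp
    have "degree (map_poly (of_int::int\<Rightarrow>complex) p) = 0" using map_poly_degree_leq[of of_int p] d0 by simp
    hence "poly (map_poly of_int p) u = coeff (map_poly of_int p) 0" by (simp add: poly_altdef)
    also have "\<dots> = 1" using lc d0 by (simp add: coeff_map_poly)
    finally show False using r by simp
  qed
  obtain q s where qs: "pseudo_divmod (monom 1 k) p = (q, s)" by (cases "pseudo_divmod (monom 1 k) p")
  have e: "monom 1 k = p * q + s" using pseudo_divmod(1)[OF p0 qs] lc by simp
  have ds: "degree s < degree p" using pseudo_divmod(2)[OF p0 qs] dp by auto
  have "u ^ k = poly (map_poly of_int (monom 1 k)) u" by (simp add: map_poly_monom poly_monom)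
  also have "\<dots> = poly (map_poly of_int s) u"
    by (simp only: e map_poly_of_int_add map_poly_of_int_mult poly_add poly_mult r) simp
  also have "\<dots> = (\<Sum>i<degree p. coeff (map_poly of_int s) i * u ^ i)"
    using map_poly_degree_leq[of "of_int :: int \<Rightarrow> complex" s] ds by (intro poly_sum_lessThan) simp
  also have "\<dots> = (\<Sum>i<degree p. of_int (coeff s i) * u ^ i)"
    by (simp add: coeff_map_poly)
  finally show ?thesis by blast
qed

lemma alg_denom:
  assumes u: "u \<in> KK" and a: "algebraic_integer u"
  shows "\<exists>D::int. D > 0 \<and> (\<forall>k. zth (of_int D * u ^ k))"
proof -
  obtain p :: "int poly" where lc: "lead_coeff p = 1" and r: "poly (map_poly of_int p) u = 0"
    using a unfolding algebraic_integer_def by blast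
  obtain D where D: "D > 0" "\<forall>z\<in>(\<lambda>i. u ^ i) ` {..<degree p}. zth (of_int D * z)"
    using K_denom_fin[of "(\<lambda>i. u ^ i) ` {..<degree p}"] K_power[OF u] by auto
  have "zth (of_int D * u ^ k)" for k
  proof -
    obtain c where c: "u ^ k = (\<Sum>i<degree p. of_int (c i) * u ^ i)" using alg_pow[OF lc r] by blast
    have e: "of_int D * u ^ k = (\<Sum>i<degree p. of_int (c i) * (of_int D * u ^ i))"
      unfolding c by (simp add: sum_distrib_left mult.left_commute)
    have Dh: "\<And>i. i < degree p \<Longrightarrow> zth (of_int D * u ^ i)" using D by auto
    have "zth (\<Sum>i<degree p. of_int (c i) * (of_int D * u ^ i))"
      by (rule zth_sum, rule zth_int_mult, rule Dh) auto
    thus ?thesis using e by simp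
  qed
  thus ?thesis using D by blast
qed

lemma nrm_int_of_denom:
  assumes w: "w \<in> KK" and D: "D > 0" and h: "\<And>k. zth (of_int D * w ^ k)"
  shows "cmod w ^ 2 \<in> \<int>"
proof (rule rat_bounded_denom_int[of _ "D * D"])
  show "cmod w ^ 2 \<in> \<rat>" using K_nrm[OF w] .
  show "D * D > 0" using D by simp
  fix k
  have "of_int (D * D) * (cmod w ^ 2) ^ k = cmod (of_int D * w ^ k) ^ 2"
    by (simp add: norm_mult norm_power power_mult_distrib power_mult[symmetric] mult.commute power2_eq_square)
  thus "of_int (D * D) * (cmod w ^ 2) ^ k \<in> \<int>" using zth_nrm[OF h[of k]] by simp
qed


lemma cmod_sq: "cmod z ^ 2 = Re z ^ 2 + Im z ^ 2" by (rule cmod_power2)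

lemma R_iff: "z \<in> RR \<longleftrightarrow> z \<in> KK \<and> 2 * Re z \<in> \<int> \<and> cmod z ^ 2 \<in> \<int>"
proof
  assume "z \<in> RR"
  hence z: "z \<in> KK" and a: "algebraic_integer z" by (auto simp: ring_of_integers_def)
  obtain D where D: "D > 0" "\<And>k. zth (of_int D * z ^ k)" using alg_denom[OF z a] by blast
  have n: "cmod z ^ 2 \<in> \<int>" using nrm_int_of_denom[OF z D] .
  have z1: "z + 1 \<in> KK" using z K_add K_one by blast
  have "zth (of_int D * (z + 1) ^ k)" for k
  proof -
    have "(z + 1) ^ k = (\<Sum>j\<le>k. of_nat (k choose j) * z ^ j * 1 ^ (k - j))"
      by (rule binomial_ring)
    hence "of_int D * (z + 1) ^ k = (\<Sum>j\<le>k. of_nat (k choose j) * (of_int D * z ^ j))"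
      by (simp add: sum_distrib_left mult.left_commute)
    moreover have "zth (\<Sum>j\<le>k. of_nat (k choose j) * (of_int D * z ^ j))"
      by (rule zth_sum, rule zth_nat_mult, rule D(2))
    ultimately show ?thesis by simp
  qed
  hence n1: "cmod (z + 1) ^ 2 \<in> \<int>" using nrm_int_of_denom[OF z1 D(1)] by blast
  have "2 * Re z = cmod (z + 1) ^ 2 - cmod z ^ 2 - 1"
    unfolding cmod_sq by (simp add: power2_eq_square algebra_simps)
  hence "2 * Re z \<in> \<int>" using n n1 by simp
  thus "z \<in> KK \<and> 2 * Re z \<in> \<int> \<and> cmod z ^ 2 \<in> \<int>" using z n by simp
next
  assume h: "z \<in> KK \<and> 2 * Re z \<in> \<int> \<and> cmod z ^ 2 \<in> \<int>"
  then obtain t n :: int where t: "2 * Re z = of_int t" and n: "cmod z ^ 2 = of_int n"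
    by (auto elim!: Ints_cases)
  define p :: "int poly" where "p = [:n, -t, 1:]"
  have "lead_coeff p = 1" by (simp add: p_def)
  moreover have "poly (map_poly of_int p) z = 0"
  proof -
    have "poly (map_poly of_int p) z = of_int n - of_int t * z + z * z"
      by (simp add: p_def map_poly_pCons algebra_simps)
    also have "\<dots> = 0"
    proof (rule complex_eqI)
      have "Re (of_int n - of_int t * z + z * z) = cmod z ^ 2 - 2 * Re z * Re z + (Re z * Re z - Im z * Im z)"
        using t n by simp
      also have "\<dots> = 0" unfolding cmod_sq by (simp add: power2_eq_square)
      finally show "Re (of_int n - of_int t * z + z * z) = Re 0" by simp
      have "Im (of_int n - of_int t * z + z * z) = - (2 * Re z) * Im z + 2 * Re z * Im z"
        using t by simp
      thus "Im (of_int n - of_int t * z + z * z) = Im 0" by simp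
    qed
    finally show ?thesis .
  qed
  ultimately have "algebraic_integer z" unfolding algebraic_integer_def by blast
  thus "z \<in> RR" using h by (simp add: ring_of_integers_def)
qed

lemma R_K: "z \<in> RR \<Longrightarrow> z \<in> KK" by (simp add: R_iff)

lemma R_of_int[simp]: "of_int k \<in> RR"
proof -
  have "cmod (of_int k) ^ 2 = of_int (k ^ 2)" by simp
  hence "cmod (of_int k) ^ 2 \<in> \<int>" by (metis Ints_of_int)
  thus ?thesis by (simp add: R_iff)
qed

lemma R_0[simp]: "0 \<in> RR" using R_of_int[of 0] by simp
lemma R_1[simp]: "1 \<in> RR" using R_of_int[of 1] by simp

lemma R_cnj: "z \<in> RR \<Longrightarrow> cnj z \<in> RR" by (simp add: R_iff K_cnj)
lemma R_uminus: "z \<in> RR \<Longrightarrow> - z \<in> RR"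
proof -
  assume z: "z \<in> RR"
  have "2 * Re (- z) = - (2 * Re z)" by simp
  thus ?thesis using z by (simp add: R_iff K_uminus)
qed

lemma par4: fixes X Y :: int assumes "4 dvd (X^2 - Y^2)" shows "2 dvd (X - Y)" "2 dvd (X + Y)"
proof -
  have "(2::int) dvd 4" by simp
  hence e: "even (X^2 - Y^2)" using assms by (rule dvd_trans)
  thus "2 dvd (X - Y)" by simp
  thus "2 dvd (X + Y)" by simp
qed

lemma R_add_mult:
  assumes u: "u \<in> RR" and v: "v \<in> RR"
  shows "u + v \<in> RR" "u * v \<in> RR"
proof -
  have uK: "u \<in> KK" and vK: "v \<in> KK" using u v by (simp_all add: R_iff)
  obtain tu nu :: int where tu: "2 * Re u = of_int tu" and nu: "cmod u ^ 2 = of_int nu"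
    using u by (auto simp: R_iff elim!: Ints_cases)
  obtain tv nv :: int where tv: "2 * Re v = of_int tv" and nv: "cmod v ^ 2 = of_int nv"
    using v by (auto simp: R_iff elim!: Ints_cases)
  have eu: "(2 * Im u) ^ 2 = 4 * of_int nu - of_int tu ^ 2"
    using nu tu unfolding cmod_sq by (simp add: power2_eq_square algebra_simps flip: tu)
  have ev: "(2 * Im v) ^ 2 = 4 * of_int nv - of_int tv ^ 2"
    using nv tv unfolding cmod_sq by (simp add: power2_eq_square algebra_simps flip: tv)
  have "(2 * Im u) * (2 * Im v) = 4 * (real d * (Im u / sd) * (Im v / sd))"
    by (simp only: Im_mult_sd[symmetric])
  moreover have "4 * (real d * (Im u / sd) * (Im v / sd)) \<in> \<rat>"
    using uK vK unfolding inK_iff by (intro Rats_mult) auto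
  ultimately have yQ: "(2 * Im u) * (2 * Im v) \<in> \<rat>" by simp
  have "((2 * Im u) * (2 * Im v)) ^ 2 = (2 * Im u) ^ 2 * (2 * Im v) ^ 2"
    by (simp add: power_mult_distrib)
  also have "\<dots> = of_int ((4 * nu - tu ^ 2) * (4 * nv - tv ^ 2))" unfolding eu ev by simp
  finally have "((2 * Im u) * (2 * Im v)) ^ 2 \<in> \<int>" by simp
  with yQ have "(2 * Im u) * (2 * Im v) \<in> \<int>" by (rule rat_sq_int)
  then obtain y :: int where y: "(2 * Im u) * (2 * Im v) = of_int y" by (auto elim!: Ints_cases)
  have "of_int (y ^ 2) = (real_of_int ((4 * nu - tu ^ 2) * (4 * nv - tv ^ 2)))"
  proof -
    have "of_int (y ^ 2) = ((2 * Im u) * (2 * Im v)) ^ 2" using y by simp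
    also have "\<dots> = (2 * Im u) ^ 2 * (2 * Im v) ^ 2" by (simp add: power_mult_distrib)
    also have "\<dots> = of_int ((4 * nu - tu ^ 2) * (4 * nv - tv ^ 2))" unfolding eu ev by simp
    finally show ?thesis .
  qed
  hence yy: "y ^ 2 = (4 * nu - tu ^ 2) * (4 * nv - tv ^ 2)" using of_int_eq_iff by blast
  have "(tu * tv) ^ 2 - y ^ 2 = 4 * (nu * tv ^ 2 + nv * tu ^ 2 - 4 * nu * nv)"
    unfolding yy by (simp add: power2_eq_square algebra_simps)
  hence d4: "4 dvd ((tu * tv) ^ 2 - y ^ 2)" by simp
  obtain a where a: "tu * tv - y = 2 * a" using par4(1)[OF d4] by blast
  obtain b where b: "tu * tv + y = 2 * b" using par4(2)[OF d4] by blast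
  have "2 * Re (u * v) = ((2 * Re u) * (2 * Re v) - (2 * Im u) * (2 * Im v)) / 2"
    by simp
  also have "\<dots> = of_int (tu * tv - y) / 2" using tu tv y by simp
  also have "\<dots> = of_int a" unfolding a by simp
  finally have m1: "2 * Re (u * v) \<in> \<int>" by simp
  have "cmod (u * v) ^ 2 = cmod u ^ 2 * cmod v ^ 2" by (simp add: norm_mult power_mult_distrib)
  hence m2: "cmod (u * v) ^ 2 \<in> \<int>" using nu nv by simp
  show "u * v \<in> RR" using m1 m2 K_mult[OF uK vK] by (simp add: R_iff)
  have "2 * Re (u + v) = of_int (tu + tv)" using tu tv by simp
  hence a1: "2 * Re (u + v) \<in> \<int>" by (metis Ints_of_int)
  have "cmod (u + v) ^ 2 = cmod u ^ 2 + cmod v ^ 2 + ((2 * Re u) * (2 * Re v) + (2 * Im u) * (2 * Im v)) / 2"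
    unfolding cmod_sq by (simp add: power2_eq_square algebra_simps)
  also have "\<dots> = of_int nu + of_int nv + of_int (tu * tv + y) / 2" using nu nv tu tv y by simp
  also have "\<dots> = of_int (nu + nv + b)" unfolding b by simp
  finally have a2: "cmod (u + v) ^ 2 \<in> \<int>" by simp
  show "u + v \<in> RR" using a1 a2 K_add[OF uK vK] by (simp add: R_iff)
qed

lemma R_add: "u \<in> RR \<Longrightarrow> v \<in> RR \<Longrightarrow> u + v \<in> RR" using R_add_mult by blast
lemma R_mult: "u \<in> RR \<Longrightarrow> v \<in> RR \<Longrightarrow> u * v \<in> RR" using R_add_mult by blast
lemma R_diff: "u \<in> RR \<Longrightarrow> v \<in> RR \<Longrightarrow> u - v \<in> RR" using R_add R_uminus by (metis diff_conv_add_uminus)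

lemma R_th: "th \<in> RR"
proof -
  have "cmod th ^ 2 = of_int (int d)" by (simp add: cmod_sq)
  thus ?thesis using K_th by (simp add: R_iff)
qed
end



context qf begin

lemma R_real: assumes z: "z \<in> RR" and im: "Im z = 0" shows "\<exists>k. z = of_int k"
proof -
  have "Re z \<in> \<rat>" using z by (simp add: R_iff inK_iff)
  moreover have "Re z ^ 2 \<in> \<int>" using z im by (simp add: R_iff cmod_sq)
  ultimately have "Re z \<in> \<int>" by (rule rat_sq_int)
  then obtain k where "Re z = of_int k" by (auto elim: Ints_cases)
  hence "z = of_int k" using im by (intro complex_eqI) simp_all
  thus ?thesis by blast
qed

lemma R_Im4: assumes z: "z \<in> RR" shows "\<exists>k::nat. 4 * Im z ^ 2 = of_nat k"
proof -
  have "4 * Im z ^ 2 = 4 * cmod z ^ 2 - (2 * Re z) ^ 2" unfolding cmod_sq by (simp add: power2_eq_square)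
  moreover have "4 * cmod z ^ 2 - (2 * Re z) ^ 2 \<in> \<int>"
  proof -
    have a: "2 * Re z \<in> \<int>" "cmod z ^ 2 \<in> \<int>" using z by (simp_all add: R_iff)
    have b: "(2 * Re z) ^ 2 \<in> \<int>" using a(1) by (rule Ints_power)
    have c: "4 * cmod z ^ 2 \<in> \<int>" using a(2) by (intro Ints_mult) simp_all
    show ?thesis using Ints_diff[OF c b] .
  qed
  ultimately have "4 * Im z ^ 2 \<in> \<int>" by simp
  then obtain k where k: "4 * Im z ^ 2 = of_int k" by (auto elim: Ints_cases)
  have "k \<ge> 0" using k by (metis of_int_0_le_iff zero_le_power2 mult_nonneg_nonneg zero_le_numeral)
  hence "4 * Im z ^ 2 = of_nat (nat k)" using k by simp
  thus ?thesis by blast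
qed

lemma om_exists: "\<exists>w. w \<in> RR \<and> Im w > 0 \<and> (\<forall>z\<in>RR. Im z > 0 \<longrightarrow> Im w \<le> Im z)"
proof -
  define P where "P k \<longleftrightarrow> (\<exists>z\<in>RR. Im z > 0 \<and> 4 * Im z ^ 2 = of_nat k)" for k :: nat
  have "P (4 * d)" unfolding P_def using R_th sd_pos by (intro bexI[of _ th]) auto
  hence "P (LEAST k. P k)" by (rule LeastI)
  then obtain w where w: "w \<in> RR" "Im w > 0" "4 * Im w ^ 2 = of_nat (LEAST k. P k)" unfolding P_def by blast
  have "Im w \<le> Im z" if z: "z \<in> RR" "Im z > 0" for z
  proof -
    obtain k where k: "4 * Im z ^ 2 = of_nat k" using R_Im4[OF z(1)] by blast
    have "P k" unfolding P_def using z k by blast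
    hence "(LEAST k. P k) \<le> k" by (rule Least_le)
    hence "Im w ^ 2 \<le> Im z ^ 2" using w(3) k by linarith
    thus ?thesis using w(2) z(2) by (simp add: power2_le_iff_abs_le abs_of_pos)
  qed
  thus ?thesis using w by blast
qed

definition om :: complex where
  "om = (SOME w. w \<in> RR \<and> Im w > 0 \<and> (\<forall>z\<in>RR. Im z > 0 \<longrightarrow> Im w \<le> Im z))"

lemma om: "om \<in> RR" "Im om > 0" "\<And>z. z \<in> RR \<Longrightarrow> Im z > 0 \<Longrightarrow> Im om \<le> Im z"
  using someI_ex[OF om_exists] unfolding om_def[symmetric] by blast+

lemma R_basis: "z \<in> RR \<longleftrightarrow> (\<exists>m n::int. z = of_int m + of_int n * om)"
proof
  assume z: "z \<in> RR"
  define n where "n = \<lfloor>Im z / Im om\<rfloor>"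
  define v where "v = z - of_int n * om"
  have v: "v \<in> RR" unfolding v_def using z om(1) by (intro R_diff R_mult) simp_all
  have "of_int n \<le> Im z / Im om" "Im z / Im om < of_int n + 1" unfolding n_def by linarith+
  hence "of_int n * Im om \<le> Im z" "Im z < (of_int n + 1) * Im om"
    using om(2) by (simp_all add: field_simps)
  hence iv: "0 \<le> Im v" "Im v < Im om" unfolding v_def by (simp_all add: algebra_simps)
  have "Im v = 0"
  proof (rule ccontr)
    assume "Im v \<noteq> 0" hence "Im v > 0" using iv by simp
    thus False using om(3)[OF v] iv by simp
  qed
  then obtain m where "v = of_int m" using R_real[OF v] by blast
  hence "z = of_int m + of_int n * om" unfolding v_def by (simp add: algebra_simps)
  thus "\<exists>m n::int. z = of_int m + of_int n * om" by blast
next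
  assume "\<exists>m n::int. z = of_int m + of_int n * om"
  then obtain m n where "z = of_int m + of_int n * om" by blast
  thus "z \<in> RR" using om(1) by (simp add: R_add R_mult)
qed

lemma basis_unique:
  assumes "of_int m + of_int n * om = of_int m' + of_int n' * om"
  shows "m = m'" "n = n'"
proof -
  have "Im (of_int m + of_int n * om) = Im (of_int m' + of_int n' * om)" using assms by simp
  hence "of_int n * Im om = of_int n' * Im om" by simp
  thus nn: "n = n'" using om(2) by simp
  show "m = m'" using assms unfolding nn by simp
qed

definition T :: int where "T = \<lfloor>2 * Re om\<rfloor>"
definition Nw :: int where "Nw = \<lfloor>cmod om ^ 2\<rfloor>"

lemma T: "2 * Re om = of_int T" and Nw: "cmod om ^ 2 = of_int Nw"
  using om(1) unfolding T_def Nw_def R_iff by (auto elim!: Ints_cases)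

lemma cnj_om: "cnj om = of_int T - om"
  using T by (intro complex_eqI) simp_all

lemma om_sq: "om * om = of_int T * om - of_int Nw"
proof -
  have "om * cnj om = of_int Nw" using Nw complex_norm_square[of om] by simp
  thus ?thesis unfolding cnj_om by (simp add: algebra_simps)
qed

end



lemma int_small_mult_zero:
  fixes j j' y c :: int
  assumes "0 \<le> j" "j < c" "0 \<le> j'" "j' < c" "j - j' = y * c"
  shows "y = 0"
proof (rule ccontr)
  assume y: "y \<noteq> 0"
  have c: "c > 0" using assms by simp
  have "\<bar>y * c\<bar> = \<bar>y\<bar> * c" using c by (simp add: abs_mult)
  also have "\<dots> \<ge> 1 * c" using y c by (intro mult_right_mono) auto
  finally have "\<bar>j - j'\<bar> \<ge> c" using assms(5) by simp
  thus False using assms by linarith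
qed

context qf begin

lemma id_sub: "nonzero_ideal RR A \<Longrightarrow> A \<subseteq> RR" by (simp add: nonzero_ideal_def)
lemma id_0: "nonzero_ideal RR A \<Longrightarrow> 0 \<in> A" by (simp add: nonzero_ideal_def)
lemma id_add: "nonzero_ideal RR A \<Longrightarrow> x \<in> A \<Longrightarrow> y \<in> A \<Longrightarrow> x + y \<in> A"
  by (simp add: nonzero_ideal_def)
lemma id_rmult: "nonzero_ideal RR A \<Longrightarrow> r \<in> RR \<Longrightarrow> x \<in> A \<Longrightarrow> r * x \<in> A"
  by (simp add: nonzero_ideal_def)
lemma id_int: "nonzero_ideal RR A \<Longrightarrow> x \<in> A \<Longrightarrow> of_int k * x \<in> A"
  using id_rmult[of A "of_int k" x] by simp
lemma id_neg: "nonzero_ideal RR A \<Longrightarrow> x \<in> A \<Longrightarrow> - x \<in> A"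
  using id_int[of A x "-1"] by simp
lemma id_diff: "nonzero_ideal RR A \<Longrightarrow> x \<in> A \<Longrightarrow> y \<in> A \<Longrightarrow> x - y \<in> A"
  using id_add[of A x "- y"] id_neg[of A y] by simp
lemma id_nz: "nonzero_ideal RR A \<Longrightarrow> \<exists>z\<in>A. z \<noteq> 0"
  by (auto simp: nonzero_ideal_def)

lemma coset_eq:
  assumes A: "nonzero_ideal RR A"
  shows "((\<lambda>c. x + c) ` A = (\<lambda>c. y + c) ` A) \<longleftrightarrow> x - y \<in> A"
proof
  assume e: "(\<lambda>c. x + c) ` A = (\<lambda>c. y + c) ` A"
  have "x \<in> (\<lambda>c. x + c) ` A" using id_0[OF A] by force
  then obtain c where "c \<in> A" "x = y + c" using e by auto
  thus "x - y \<in> A" by simp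
next
  assume h: "x - y \<in> A"
  have "y - x \<in> A" using id_neg[OF A h] by simp
  show "(\<lambda>c. x + c) ` A = (\<lambda>c. y + c) ` A"
  proof (intro equalityI subsetI)
    fix z assume "z \<in> (\<lambda>c. x + c) ` A"
    then obtain c where c: "c \<in> A" "z = x + c" by auto
    have "z = y + ((x - y) + c)" using c by simp
    moreover have "(x - y) + c \<in> A" using id_add[OF A h c(1)] .
    ultimately show "z \<in> (\<lambda>c. y + c) ` A" by blast
  next
    fix z assume "z \<in> (\<lambda>c. y + c) ` A"
    then obtain c where c: "c \<in> A" "z = y + c" by auto
    have "z = x + ((y - x) + c)" using c by simp
    moreover have "(y - x) + c \<in> A" using id_add[OF A \<open>y - x \<in> A\<close> c(1)] .
    ultimately show "z \<in> (\<lambda>c. x + c) ` A" by blast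
  qed
qed

lemma hnf:
  assumes A: "nonzero_ideal RR A"
  obtains c m \<beta> :: int where "c > 0" "m > 0" "m dvd (\<beta>^2 + T * \<beta> + Nw)"
    "A = {of_int x * of_int (c * m) + of_int y * (of_int c * (of_int \<beta> + om)) | x y. True}"
    "ideal_norm RR A = nat (c * c * m)"
proof -
  note Asub = id_sub[OF A]
  obtain z0 where z0: "z0 \<in> A" "z0 \<noteq> 0" using id_nz[OF A] by blast
  have "z0 \<in> RR" using z0 Asub by blast
  hence "cnj z0 * z0 \<in> A" using id_rmult[OF A R_cnj z0(1)] by blast
  moreover obtain n0 :: int where n0: "cmod z0 ^ 2 = of_int n0"
    using \<open>z0 \<in> RR\<close> by (auto simp: R_iff elim!: Ints_cases)
  moreover have "cnj z0 * z0 = complex_of_real (cmod z0 ^ 2)"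
    using complex_norm_square[of z0] by (simp add: mult.commute)
  ultimately have n0A: "of_int n0 \<in> A" by simp
  have "n0 > 0" using n0 z0(2) by (metis of_int_0_less_iff zero_less_norm_iff zero_less_power)
  define Pa where "Pa k \<longleftrightarrow> k > 0 \<and> (of_nat k :: complex) \<in> A" for k :: nat
  have "Pa (nat n0)" unfolding Pa_def using n0A \<open>n0 > 0\<close> by simp
  hence Pa0: "Pa (LEAST k. Pa k)" by (rule LeastI)
  define a where "a = int (LEAST k. Pa k)"
  have a0: "a > 0" and aA: "of_int a \<in> A" using Pa0 unfolding Pa_def a_def by simp_all
  have multa: "a dvd k" if k: "of_int k \<in> A" for k
  proof -
    define r where "r = k mod a"
    have "of_int r = of_int k - of_int (k div a) * (of_int a :: complex)"
      unfolding r_def by (simp add: mod_div_mult_eq[symmetric] algebra_simps flip: of_int_mult of_int_diff)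
    hence rA: "of_int r \<in> A" using id_diff[OF A k id_int[OF A aA]] by simp
    have r0: "0 \<le> r" "r < a" unfolding r_def using a0 by simp_all
    have "r = 0"
    proof (rule ccontr)
      assume "r \<noteq> 0" hence "Pa (nat r)" unfolding Pa_def using r0 rA by simp
      hence "(LEAST k. Pa k) \<le> nat r" by (rule Least_le)
      thus False using r0 unfolding a_def by linarith
    qed
    thus ?thesis unfolding r_def by (simp add: dvd_eq_mod_eq_0)
  qed
  define Pc where "Pc k \<longleftrightarrow> k > 0 \<and> (\<exists>x::int. of_int x + of_nat k * om \<in> A)" for k :: nat
  have "of_int 0 + of_nat (nat a) * om \<in> A"
    using id_rmult[OF A om(1) aA] a0 by (simp add: mult.commute)
  hence "Pc (nat a)" unfolding Pc_def using a0 by (intro conjI exI[of _ 0]) auto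
  hence Pc0: "Pc (LEAST k. Pc k)" by (rule LeastI)
  define c where "c = int (LEAST k. Pc k)"
  obtain b where c0: "c > 0" and gA: "of_int b + of_int c * om \<in> A"
    using Pc0 unfolding Pc_def c_def by auto
  define g where "g = of_int b + of_int c * om"
  have multc: "c dvd y" if h: "of_int x + of_int y * om \<in> A" for x y
  proof -
    define r where "r = y mod c"
    define q where "q = y div c"
    have ye: "(of_int y :: complex) = of_int c * of_int q + of_int r"
      unfolding q_def r_def by (metis div_mult_mod_eq mult.commute of_int_add of_int_mult)
    have "of_int x + of_int y * om - of_int q * g = of_int (x - q * b) + of_int r * om"
      unfolding g_def ye by (simp add: algebra_simps)
    moreover have "of_int x + of_int y * om - of_int q * g \<in> A"
      using id_diff[OF A h id_int[OF A gA[folded g_def]]] .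
    ultimately have rA: "of_int (x - q * b) + of_int r * om \<in> A" by metis
    have r0: "0 \<le> r" "r < c" unfolding r_def using c0 by simp_all
    have "r = 0"
    proof (rule ccontr)
      assume "r \<noteq> 0" hence "Pc (nat r)" unfolding Pc_def using r0 rA by (intro conjI exI[of _ "x - q * b"]) auto
      hence "(LEAST k. Pc k) \<le> nat r" by (rule Least_le)
      thus False using r0 unfolding c_def by linarith
    qed
    thus ?thesis unfolding r_def by (simp add: dvd_eq_mod_eq_0)
  qed
  have rep: "\<exists>x y. z = of_int x * of_int a + of_int y * g" if z: "z \<in> A" for z
  proof -
    obtain m' n' where mn: "z = of_int m' + of_int n' * om" using z Asub R_basis by blast
    have "c dvd n'" using multc[of m' n'] z mn by simp
    then obtain q where q: "n' = c * q" by blast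
    have "z - of_int q * g = of_int (m' - q * b)"
      unfolding mn g_def q by (simp add: algebra_simps)
    moreover have "z - of_int q * g \<in> A" using id_diff[OF A z id_int[OF A gA[folded g_def]]] .
    ultimately have "a dvd (m' - q * b)" using multa by simp
    then obtain p where p: "m' - q * b = a * p" by blast
    have "z = of_int p * of_int a + of_int q * g"
      using \<open>z - of_int q * g = of_int (m' - q * b)\<close> unfolding p by (simp add: algebra_simps)
    thus ?thesis by blast
  qed
  have repI: "of_int x * of_int a + of_int y * g \<in> A" for x y
    using id_add[OF A id_int[OF A aA] id_int[OF A gA[folded g_def]]] by simp
  have "c dvd a" using multc[of 0 a] id_rmult[OF A om(1) aA] by (simp add: mult.commute)
  then obtain m where am: "a = c * m" by blast
  have m0: "m > 0" using am a0 c0 by (simp add: zero_less_mult_iff)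
  obtain x1 y1 where xy1: "of_int a * om = of_int x1 * of_int a + of_int y1 * g"
    using rep[of "of_int a * om"] id_rmult[OF A om(1) aA] by (auto simp: mult.commute)
  have "of_int 0 + of_int a * om = of_int (x1 * a + y1 * b) + of_int (y1 * c) * om"
    using xy1 unfolding g_def by (simp add: algebra_simps)
  hence e1: "0 = x1 * a + y1 * b" "a = y1 * c" using basis_unique by blast+
  have "y1 = m" using e1(2) am c0 by simp
  hence "c * m * x1 + m * b = 0" using e1(1) am by (simp add: algebra_simps)
  hence "m * (c * x1 + b) = 0" by (simp add: algebra_simps)
  hence "b = - c * x1" using m0 by simp
  then obtain \<beta> where b\<beta>: "b = c * \<beta>" by (metis mult.commute mult_minus_left dvd_def mult.assoc)
  have gb: "g = of_int c * (of_int \<beta> + om)" unfolding g_def b\<beta> by (simp add: algebra_simps)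
  have "om * g \<in> A" using id_rmult[OF A om(1) gA[folded g_def]] .
  then obtain x2 y2 where xy2: "om * g = of_int x2 * of_int a + of_int y2 * g" using rep by blast
  have "om * g = of_int (b) * om + of_int c * (om * om)" unfolding g_def by (simp add: algebra_simps)
  also have "\<dots> = of_int (- c * Nw) + of_int (b + c * T) * om" unfolding om_sq by (simp add: algebra_simps)
  finally have ea: "om * g = of_int (- c * Nw) + of_int (b + c * T) * om" .
  have "of_int (- c * Nw) + of_int (b + c * T) * om = of_int (x2 * a + y2 * b) + of_int (y2 * c) * om"
  proof -
    have "of_int (- c * Nw) + of_int (b + c * T) * om = om * g" using ea by simp
    also have "\<dots> = of_int x2 * of_int a + of_int y2 * g" by (rule xy2)
    also have "\<dots> = of_int (x2 * a + y2 * b) + of_int (y2 * c) * om" unfolding g_def by (simp add: algebra_simps)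
    finally show ?thesis .
  qed
  hence e2: "- c * Nw = x2 * a + y2 * b" "b + c * T = y2 * c" using basis_unique by blast+
  have "c * (\<beta> + T) = c * y2" using e2(2) unfolding b\<beta> by (simp add: algebra_simps)
  hence "y2 = \<beta> + T" using c0 by simp
  hence "- c * Nw = c * (x2 * m + (\<beta> + T) * \<beta>)" using e2(1) unfolding am b\<beta> by (simp add: algebra_simps)
  hence "c * (- Nw) = c * (x2 * m + (\<beta> + T) * \<beta>)" by simp
  hence "- Nw = x2 * m + (\<beta> + T) * \<beta>" using c0 by (simp only: mult_cancel_left) simp
  hence "\<beta>^2 + T * \<beta> + Nw = m * (- x2)" by (simp add: power2_eq_square algebra_simps)
  hence mdvd: "m dvd (\<beta>^2 + T * \<beta> + Nw)" by (metis dvd_triv_left)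
  have Aeq: "A = {of_int x * of_int (c * m) + of_int y * (of_int c * (of_int \<beta> + om)) | x y. True}"
  proof (intro equalityI subsetI)
    fix z assume "z \<in> A"
    then obtain x y where "z = of_int x * of_int a + of_int y * g" using rep by blast
    thus "z \<in> {of_int x * of_int (c * m) + of_int y * (of_int c * (of_int \<beta> + om)) | x y. True}"
      unfolding am gb by blast
  next
    fix z assume "z \<in> {of_int x * of_int (c * m) + of_int y * (of_int c * (of_int \<beta> + om)) | x y. True}"
    then obtain x y where "z = of_int x * of_int (c * m) + of_int y * (of_int c * (of_int \<beta> + om))" by blast
    thus "z \<in> A" using repI[of x y] unfolding am gb by simp
  qed
  define cs where "cs x = (\<lambda>c. x + c) ` A" for x
  define G where "G = (\<lambda>(i, j). of_int i + of_int j * om) ` ({0..<a} \<times> {0..<c})"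
  have GR: "G \<subseteq> RR"
  proof
    fix u assume "u \<in> G"
    then obtain i j where "u = of_int i + of_int j * om" unfolding G_def by auto
    thus "u \<in> RR" unfolding R_basis by blast
  qed
  have img: "cs ` RR = cs ` G"
  proof (intro equalityI subsetI)
    fix u assume "u \<in> cs ` RR"
    then obtain z where z: "z \<in> RR" "u = cs z" by blast
    obtain m' n' where mn: "z = of_int m' + of_int n' * om" using z R_basis by blast
    define j where "j = n' mod c"
    define q where "q = n' div c"
    define i where "i = (m' - q * b) mod a"
    define p where "p = (m' - q * b) div a"
    have n'e: "n' = q * c + j" unfolding j_def q_def by simp
    have m'e: "m' - q * b = p * a + i" unfolding i_def p_def by simp
    have "z - (of_int i + of_int j * om) = of_int p * of_int a + of_int q * g"
    proof -
      have "z - (of_int i + of_int j * om) = of_int (m' - i) + of_int (n' - j) * om"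
        unfolding mn by (simp add: algebra_simps)
      also have "\<dots> = of_int (p * a + q * b) + of_int (q * c) * om"
        using n'e m'e by (simp add: algebra_simps)
      also have "\<dots> = of_int p * of_int a + of_int q * g" unfolding g_def by (simp add: algebra_simps)
      finally show ?thesis .
    qed
    hence "z - (of_int i + of_int j * om) \<in> A" using repI by simp
    hence "cs z = cs (of_int i + of_int j * om)" unfolding cs_def using coset_eq[OF A, of z "of_int i + of_int j * om"] by simp
    moreover have "of_int i + of_int j * om \<in> G" unfolding G_def
      by (rule image_eqI[of _ _ "(i, j)"]) (simp_all add: i_def j_def a0 c0)
    ultimately show "u \<in> cs ` G" using z by blast
  next
    fix u assume "u \<in> cs ` G" thus "u \<in> cs ` RR" using GR by blast
  qed
  have injG: "inj_on cs G"
  proof (rule inj_onI)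
    fix u v assume u: "u \<in> G" and v: "v \<in> G" and e: "cs u = cs v"
    obtain i j where ij: "u = of_int i + of_int j * om" "0 \<le> i" "i < a" "0 \<le> j" "j < c"
      using u unfolding G_def by auto
    obtain i' j' where ij': "v = of_int i' + of_int j' * om" "0 \<le> i'" "i' < a" "0 \<le> j'" "j' < c"
      using v unfolding G_def by auto
    have "u - v \<in> A" using e coset_eq[OF A, of u v] unfolding cs_def by simp
    then obtain x y where xy: "u - v = of_int x * of_int a + of_int y * g" using rep by blast
    have "of_int (i - i') + of_int (j - j') * om = of_int (x * a + y * b) + of_int (y * c) * om"
      using xy unfolding ij(1) ij'(1) g_def by (simp add: algebra_simps)
    hence e3: "i - i' = x * a + y * b" "j - j' = y * c" using basis_unique by blast+
    have "y = 0" using int_small_mult_zero[OF ij(4,5) ij'(4,5) e3(2)] .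
    hence "i - i' = x * a" using e3(1) by simp
    hence "x = 0" using int_small_mult_zero[OF ij(2,3) ij'(2,3)] by (simp add: mult.commute)
    show "u = v" using e3 \<open>y = 0\<close> \<open>x = 0\<close> unfolding ij(1) ij'(1) by simp
  qed
  have injP: "inj_on (\<lambda>(i, j). of_int i + of_int j * om) ({0..<a} \<times> {0..<c})"
  proof (rule inj_onI)
    fix p q assume "p \<in> {0..<a} \<times> {0..<c}" "q \<in> {0..<a} \<times> {0..<c}"
      and e: "(\<lambda>(i, j). of_int i + of_int j * om) p = (\<lambda>(i, j). of_int i + of_int j * om) q"
    obtain i j where p: "p = (i, j)" by (cases p)
    obtain i' j' where q: "q = (i', j')" by (cases q)
    have "of_int i + of_int j * om = of_int i' + of_int j' * om" using e unfolding p q by simp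
    thus "p = q" unfolding p q using basis_unique by blast
  qed
  have "ideal_norm RR A = card (cs ` RR)" unfolding ideal_norm_def cs_def by simp
  also have "\<dots> = card G" unfolding img using card_image[OF injG] .
  also have "\<dots> = card ({0..<a} \<times> {0..<c})" unfolding G_def using card_image[OF injP] .
  also have "\<dots> = nat a * nat c" by (simp add: card_cartesian_product)
  also have "\<dots> = nat (c * c * m)" unfolding am using c0 m0 by (simp add: nat_mult_distrib)
  finally have "ideal_norm RR A = nat (c * c * m)" .
  show ?thesis using that[OF c0 m0 mdvd Aeq \<open>ideal_norm RR A = nat (c * c * m)\<close>] .
qed

end



abbreviation mul where "mul \<equiv> frac_ideal_mult"
definition sc :: "complex \<Rightarrow> complex set \<Rightarrow> complex set" where "sc s X = (\<lambda>z. s * z) ` X"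

lemma mul_mem: "x \<in> I \<Longrightarrow> y \<in> J \<Longrightarrow> x * y \<in> mul I J"
  unfolding frac_ideal_mult_def
  by (rule CollectI, rule exI[of _ 1], rule exI[of _ "\<lambda>_. x"], rule exI[of _ "\<lambda>_. y"]) simp

lemma mul_0: "0 \<in> mul I J"
  unfolding frac_ideal_mult_def by (rule CollectI, rule exI[of _ 0]) simp

lemma mul_induct:
  assumes "0 \<in> S" "\<And>u v. u \<in> S \<Longrightarrow> v \<in> S \<Longrightarrow> u + v \<in> S" "\<And>x y. x \<in> I \<Longrightarrow> y \<in> J \<Longrightarrow> x * y \<in> S"
  shows "mul I J \<subseteq> S"
proof
  fix z assume "z \<in> mul I J"
  then obtain n :: nat and a b :: "nat \<Rightarrow> complex" where z: "z = (\<Sum>i<n. a i * b i)" and ab: "\<forall>i<n. a i \<in> I \<and> b i \<in> J"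
    unfolding frac_ideal_mult_def by blast
  have "(\<Sum>i<k. a i * b i) \<in> S" if "k \<le> n" for k
    using that
  proof (induction k)
    case 0 thus ?case using assms(1) by simp
  next
    case (Suc k) thus ?case using ab assms(2,3) by simp
  qed
  thus "z \<in> S" using z by simp
qed

lemma mul_add_prod:
  assumes p: "p \<in> mul I J" and x: "x \<in> I" and y: "y \<in> J"
  shows "p + x * y \<in> mul I J"
proof -
  obtain n :: nat and a b :: "nat \<Rightarrow> complex" where z: "p = (\<Sum>i<n. a i * b i)" and ab: "\<forall>i<n. a i \<in> I \<and> b i \<in> J"
    using p unfolding frac_ideal_mult_def by blast
  define a' where "a' = a(n := x)"
  define b' where "b' = b(n := y)"
  have "(\<Sum>i<Suc n. a' i * b' i) = p + x * y" unfolding z a'_def b'_def by simp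
  moreover have "\<forall>i<Suc n. a' i \<in> I \<and> b' i \<in> J" using ab x y unfolding a'_def b'_def by (simp add: less_Suc_eq)
  ultimately show ?thesis unfolding frac_ideal_mult_def
    by (intro CollectI exI[of _ "Suc n"] exI[of _ a'] exI[of _ b'] conjI) simp_all
qed

lemma mul_add: assumes "p \<in> mul I J" "q \<in> mul I J" shows "p + q \<in> mul I J"
proof -
  have "mul I J \<subseteq> {z. \<forall>p\<in>mul I J. p + z \<in> mul I J}"
  proof (rule mul_induct)
    show "0 \<in> {z. \<forall>p\<in>mul I J. p + z \<in> mul I J}" by simp
    show "u + v \<in> {z. \<forall>p\<in>mul I J. p + z \<in> mul I J}"
      if "u \<in> {z. \<forall>p\<in>mul I J. p + z \<in> mul I J}" "v \<in> {z. \<forall>p\<in>mul I J. p + z \<in> mul I J}" for u v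
      using that by (simp add: add.assoc[symmetric])
    show "x * y \<in> {z. \<forall>p\<in>mul I J. p + z \<in> mul I J}" if "x \<in> I" "y \<in> J" for x y
      using that mul_add_prod by blast
  qed
  thus ?thesis using assms by blast
qed

lemma mul_lmult:
  assumes I: "\<And>x. x \<in> I \<Longrightarrow> r * x \<in> I" and p: "p \<in> mul I J"
  shows "r * p \<in> mul I J"
proof -
  have "mul I J \<subseteq> {z. r * z \<in> mul I J}"
    by (rule mul_induct) (auto simp: mul_0 distrib_left intro: mul_add mul_mem I simp: mult.assoc[symmetric])
  thus ?thesis using p by blast
qed

lemma mul_comm: "mul I J = mul J I"
proof -
  have "mul I J \<subseteq> mul J I" for I J
  proof (rule mul_induct)
    show "x * y \<in> mul J I" if "x \<in> I" "y \<in> J" for x y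
      using mul_mem[OF that(2) that(1)] by (simp add: mult.commute)
  qed (auto simp: mul_0 intro: mul_add)
  thus ?thesis by blast
qed

lemma mul_mono: "I \<subseteq> I' \<Longrightarrow> J \<subseteq> J' \<Longrightarrow> mul I J \<subseteq> mul I' J'"
  by (rule mul_induct) (auto simp: mul_0 intro: mul_add mul_mem)

lemma mul_assoc: "mul (mul I J) L = mul I (mul J L)"
proof
  show "mul (mul I J) L \<subseteq> mul I (mul J L)"
  proof (rule mul_induct)
    fix p l assume p: "p \<in> mul I J" and l: "l \<in> L"
    have "mul I J \<subseteq> {z. z * l \<in> mul I (mul J L)}"
      by (rule mul_induct) (auto simp: mul_0 distrib_right intro: mul_add mul_mem l simp: mult.assoc)
    thus "p * l \<in> mul I (mul J L)" using p by blast
  qed (auto simp: mul_0 intro: mul_add)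
next
  show "mul I (mul J L) \<subseteq> mul (mul I J) L"
  proof (rule mul_induct)
    fix x q assume x: "x \<in> I" and q: "q \<in> mul J L"
    have "mul J L \<subseteq> {z. x * z \<in> mul (mul I J) L}"
      by (rule mul_induct) (auto simp: mul_0 distrib_left intro: mul_add mul_mem x simp: mult.assoc[symmetric])
    thus "x * q \<in> mul (mul I J) L" using q by blast
  qed (auto simp: mul_0 intro: mul_add)
qed

lemma mul_cnj: "cnj ` mul I J = mul (cnj ` I) (cnj ` J)"
proof
  show "cnj ` mul I J \<subseteq> mul (cnj ` I) (cnj ` J)"
  proof -
    have "mul I J \<subseteq> {z. cnj z \<in> mul (cnj ` I) (cnj ` J)}"
      by (rule mul_induct) (auto simp: mul_0 intro: mul_add mul_mem)
    thus ?thesis by blast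
  qed
  show "mul (cnj ` I) (cnj ` J) \<subseteq> cnj ` mul I J"
  proof (rule mul_induct)
    show "0 \<in> cnj ` mul I J" using mul_0 by (metis complex_cnj_zero image_eqI)
    show "u + v \<in> cnj ` mul I J" if u: "u \<in> cnj ` mul I J" and v: "v \<in> cnj ` mul I J" for u v
    proof -
      obtain u' where "u' \<in> mul I J" "u = cnj u'" using u by (auto elim!: imageE)
      moreover obtain v' where "v' \<in> mul I J" "v = cnj v'" using v by (auto elim!: imageE)
      ultimately show ?thesis by (metis complex_cnj_add image_eqI mul_add)
    qed
    show "x * y \<in> cnj ` mul I J" if x: "x \<in> cnj ` I" and y: "y \<in> cnj ` J" for x y
    proof -
      obtain x' y' where "x' \<in> I" "y' \<in> J" "x = cnj x'" "y = cnj y'" using x y by blast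
      thus ?thesis by (metis complex_cnj_mult image_eqI mul_mem)
    qed
  qed
qed

lemma mul_sc: "mul (sc s I) J = sc s (mul I J)"
proof
  show "mul (sc s I) J \<subseteq> sc s (mul I J)"
  proof (rule mul_induct)
    show "0 \<in> sc s (mul I J)" unfolding sc_def using mul_0 by (metis image_eqI mult_zero_right)
    show "u + v \<in> sc s (mul I J)" if u: "u \<in> sc s (mul I J)" and v: "v \<in> sc s (mul I J)" for u v
    proof -
      obtain u' where "u' \<in> mul I J" "u = s * u'" using u unfolding sc_def by (auto elim!: imageE)
      moreover obtain v' where "v' \<in> mul I J" "v = s * v'" using v unfolding sc_def by (auto elim!: imageE)
      ultimately show ?thesis unfolding sc_def by (metis distrib_left image_eqI mul_add)
    qed
    show "x * y \<in> sc s (mul I J)" if x: "x \<in> sc s I" and y: "y \<in> J" for x y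
    proof -
      obtain x' where "x' \<in> I" "x = s * x'" using x unfolding sc_def by blast
      thus ?thesis unfolding sc_def using y by (metis image_eqI mul_mem mult.assoc)
    qed
  qed
  show "sc s (mul I J) \<subseteq> mul (sc s I) J"
  proof -
    have "mul I J \<subseteq> {z. s * z \<in> mul (sc s I) J}"
      by (rule mul_induct) (auto simp: mul_0 distrib_left sc_def intro: mul_add mul_mem simp: mult.assoc[symmetric])
    thus ?thesis unfolding sc_def by blast
  qed
qed

lemma sc_sc: "sc s (sc t X) = sc (s * t) X" unfolding sc_def by (auto simp: image_image mult.assoc)

lemma sc_mul_right: "mul I (sc s J) = sc s (mul I J)"
  using mul_sc[of s J I] by (simp add: mul_comm)




context qf begin

lemma R_mul_ideal:
  assumes "0 \<in> A" "\<And>x y. x \<in> A \<Longrightarrow> y \<in> A \<Longrightarrow> x + y \<in> A" "\<And>r x. r \<in> RR \<Longrightarrow> x \<in> A \<Longrightarrow> r * x \<in> A"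
  shows "mul RR A = A"
proof
  show "mul RR A \<subseteq> A" by (rule mul_induct) (use assms in auto)
  show "A \<subseteq> mul RR A"
  proof
    fix x assume "x \<in> A" thus "x \<in> mul RR A" using mul_mem[OF R_1, of x A] by simp
  qed
qed

lemma mul_RR: "mul RR RR = RR"
  by (rule R_mul_ideal) (auto intro: R_add R_mult)

lemma sc_RR_mul: "mul (sc s RR) (sc t RR) = sc (s * t) RR"
  by (simp add: mul_sc sc_mul_right sc_sc mul_RR mult.commute)

lemma sc_RR_le:
  assumes s: "s > 0" and t: "t > 0" and e: "sc (of_real s) RR = sc (of_real t) RR"
  shows "t \<le> s"
proof -
  have "complex_of_real s \<in> sc (of_real s) RR" unfolding sc_def using R_1 by (metis image_eqI mult.right_neutral)
  hence "complex_of_real s \<in> sc (of_real t) RR" by (simp only: e)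
  then obtain r where r: "r \<in> RR" "complex_of_real s = of_real t * r" unfolding sc_def by blast
  have "r = complex_of_real (s / t)" using r(2) t by (simp add: field_simps)
  hence "Im r = 0" by simp
  then obtain k where k: "r = of_int k" using R_real[OF r(1)] by blast
  have "s = t * of_int k" using r(2) unfolding k by (metis of_real_eq_iff of_real_mult of_real_of_int_eq)
  hence "of_int k > (0::real)" using s t by (metis zero_less_mult_pos)
  hence "k \<ge> 1" by simp
  hence "t * 1 \<le> t * of_int k" using t by (intro mult_left_mono) simp_all
  thus ?thesis using \<open>s = t * of_int k\<close> by simp
qed

lemma sc_RR_inj:
  assumes "s > 0" "t > 0" "sc (of_real s) RR = sc (of_real t) RR" shows "s = t"
  using sc_RR_le[OF assms] sc_RR_le[OF assms(2,1) assms(3)[symmetric]] by simp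


lemma hurwitz:
  assumes A: "nonzero_ideal RR A"
  shows "mul A (cnj ` A) = sc (of_nat (ideal_norm RR A)) RR"
proof -
  obtain c m b0 :: int where c0: "c > 0" and m0: "m > 0" and mdvd: "m dvd (b0^2 + T * b0 + Nw)"
    and Aeq: "A = {of_int x * of_int (c * m) + of_int y * (of_int c * (of_int b0 + om)) | x y. True}"
    and NA: "ideal_norm RR A = nat (c * c * m)"
    using hnf[OF A] by blast
  define g where "g = c * c * m"
  have g0: "g > 0" unfolding g_def using c0 m0 by simp
  have NAg: "(of_nat (ideal_norm RR A) :: complex) = of_int g" unfolding NA g_def using g0 g_def by simp
  obtain k where k: "b0^2 + T * b0 + Nw = m * k" using mdvd by blast
  define t where "t = 2 * b0 + T"
  define \<alpha> :: complex where "\<alpha> = of_int (c * m)"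
  define \<beta> :: complex where "\<beta> = of_int c * (of_int b0 + om)"
  define \<beta>c :: complex where "\<beta>c = of_int c * (of_int b0 + of_int T - om)"
  have Aeq': "A = {of_int x * \<alpha> + of_int y * \<beta> | x y. True}" unfolding Aeq \<alpha>_def \<beta>_def by simp
  have memA: "of_int x * \<alpha> + of_int y * \<beta> \<in> A" for x y unfolding Aeq' by blast
  have cA: "cnj ` A = {of_int x * \<alpha> + of_int y * \<beta>c | x y. True}"
  proof -
    have ce: "cnj (of_int x * \<alpha> + of_int y * \<beta>) = of_int x * \<alpha> + of_int y * \<beta>c" for x y
      unfolding \<alpha>_def \<beta>_def \<beta>c_def by (simp add: cnj_om)
    show ?thesis
    proof (intro equalityI subsetI)
      fix z assume "z \<in> cnj ` A"
      then obtain x y where "z = cnj (of_int x * \<alpha> + of_int y * \<beta>)" unfolding Aeq' by blast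
      thus "z \<in> {of_int x * \<alpha> + of_int y * \<beta>c | x y. True}" unfolding ce by blast
    next
      fix z assume "z \<in> {of_int x * \<alpha> + of_int y * \<beta>c | x y. True}"
      then obtain x y where "z = of_int x * \<alpha> + of_int y * \<beta>c" by blast
      hence "z = cnj (of_int x * \<alpha> + of_int y * \<beta>)" unfolding ce .
      thus "z \<in> cnj ` A" using memA by blast
    qed
  qed
  have memC: "of_int x * \<alpha> + of_int y * \<beta>c \<in> cnj ` A" for x y unfolding cA by blast
  have wcw: "(of_int b0 + om) * (of_int b0 + of_int T - om) = of_int (m * k)"
  proof -
    have "(of_int b0 + om) * (of_int b0 + of_int T - om) = of_int (b0^2 + T * b0) + of_int T * om - om * om"
      by (simp add: algebra_simps power2_eq_square)
    also have "\<dots> = of_int (b0^2 + T * b0 + Nw)" unfolding om_sq by simp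
    finally show ?thesis unfolding k .
  qed
  have I1: "\<alpha> * \<alpha> = of_int g * of_int m" unfolding \<alpha>_def g_def by simp
  have I2: "\<alpha> * \<beta>c = of_int g * (of_int b0 + of_int T - om)" unfolding \<alpha>_def \<beta>c_def g_def by (simp add: algebra_simps)
  have I3: "\<beta> * \<alpha> = of_int g * (of_int b0 + om)" unfolding \<alpha>_def \<beta>_def g_def by (simp add: algebra_simps)
  have I4: "\<beta> * \<beta>c = of_int g * of_int k"
  proof -
    have "\<beta> * \<beta>c = of_int c * of_int c * ((of_int b0 + om) * (of_int b0 + of_int T - om))"
      unfolding \<beta>_def \<beta>c_def by (simp add: algebra_simps)
    also have "\<dots> = of_int g * of_int k" unfolding wcw g_def by simp
    finally show ?thesis .
  qed
  have sub1: "mul A (cnj ` A) \<subseteq> sc (of_int g) RR"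
  proof (rule mul_induct)
    show "0 \<in> sc (of_int g) RR" unfolding sc_def using R_0 by (metis image_eqI mult_zero_right)
    show "u + v \<in> sc (of_int g) RR" if u: "u \<in> sc (of_int g) RR" and v: "v \<in> sc (of_int g) RR" for u v
    proof -
      obtain r where "r \<in> RR" "u = of_int g * r" using u unfolding sc_def by blast
      moreover obtain r' where "r' \<in> RR" "v = of_int g * r'" using v unfolding sc_def by blast
      ultimately show ?thesis unfolding sc_def by (metis R_add distrib_left image_eqI)
    qed
    show "x * y \<in> sc (of_int g) RR" if x: "x \<in> A" and y: "y \<in> cnj ` A" for x y
    proof -
      obtain x1 y1 where xe: "x = of_int x1 * \<alpha> + of_int y1 * \<beta>" using x unfolding Aeq' by blast
      obtain x2 y2 where ye: "y = of_int x2 * \<alpha> + of_int y2 * \<beta>c" using y unfolding cA by blast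
      define r where "r = of_int (x1 * x2 * m) + of_int (x1 * y2) * (of_int b0 + of_int T - om)
                         + of_int (y1 * x2) * (of_int b0 + om) + of_int (y1 * y2 * k)"
      have rR: "r \<in> RR" unfolding r_def by (intro R_add R_mult R_diff R_of_int om(1))
      have "x * y = of_int x1 * of_int x2 * (\<alpha> * \<alpha>) + of_int x1 * of_int y2 * (\<alpha> * \<beta>c)
                  + of_int y1 * of_int x2 * (\<beta> * \<alpha>) + of_int y1 * of_int y2 * (\<beta> * \<beta>c)"
        unfolding xe ye by (simp add: algebra_simps)
      also have "\<dots> = of_int g * r" unfolding I1 I2 I3 I4 r_def by (simp add: algebra_simps)
      finally show ?thesis unfolding sc_def using rR by blast
    qed
  qed
  define h where "h = gcd m (gcd k t)"
  have h0: "h > 0" unfolding h_def using m0 by simp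
  have hm: "h dvd m" and hk: "h dvd k" and ht: "h dvd t" unfolding h_def by (meson dvd_trans gcd_dvd1 gcd_dvd2)+
  have h1: "h = 1"
  proof -
    define w where "w = of_int b0 + om"
    define z where "z = w / of_int h"
    have wK: "w \<in> KK" unfolding w_def using om(1) R_K by (simp add: K_add)
    have zK: "z \<in> KK" unfolding z_def using wK by (simp add: K_divide)
    have cwe: "cnj w = of_int b0 + of_int T - om" unfolding w_def by (simp add: cnj_om)
    have "complex_of_real (cmod w ^ 2) = w * cnj w" by (rule complex_norm_square)
    also have "\<dots> = of_int (m * k)" unfolding cwe unfolding w_def by (rule wcw)
    finally have "complex_of_real (cmod w ^ 2) = of_int (m * k)" .
    hence cw: "cmod w ^ 2 = of_int (m * k)" by (metis of_real_eq_iff of_real_of_int_eq)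
    obtain m1 where m1: "m = h * m1" using hm by blast
    obtain k1 where k1: "k = h * k1" using hk by blast
    obtain t1 where t1: "t = h * t1" using ht by blast
    have zw: "z = w * complex_of_real (1 / of_int h)" unfolding z_def by (simp add: divide_inverse)
    have "2 * Re z = (2 * of_int b0 + 2 * Re om) * (1 / of_int h)" unfolding zw w_def by simp
    also have "\<dots> = of_int t * (1 / of_int h)" unfolding t_def T by simp
    also have "\<dots> = of_int t1" using h0 unfolding t1 by simp
    finally have z1: "2 * Re z \<in> \<int>" by simp
    have "cmod z = cmod w / of_int h" unfolding z_def using h0 by (simp add: norm_divide)
    hence "cmod z ^ 2 = cmod w ^ 2 / of_int h ^ 2" by (simp add: power_divide)
    also have "\<dots> = of_int (h * m1 * (h * k1)) / of_int h ^ 2" unfolding cw m1 k1 by simp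
    also have "\<dots> = of_int (m1 * k1)" using h0 by (simp add: power2_eq_square)
    finally have z2: "cmod z ^ 2 \<in> \<int>" by simp
    have "z \<in> RR" using zK z1 z2 by (simp add: R_iff)
    then obtain p q where pq: "z = of_int p + of_int q * om" using R_basis by blast
    have "w = of_int h * z" unfolding z_def using h0 by simp
    also have "\<dots> = of_int (h * p) + of_int (h * q) * om" unfolding pq by (simp add: algebra_simps)
    finally have "of_int b0 + of_int 1 * om = of_int (h * p) + of_int (h * q) * om" unfolding w_def by simp
    hence "1 = h * q" using basis_unique(2) by blast
    thus ?thesis using h0 zmult_eq_1_iff[of h q] by auto
  qed
  obtain u v where uv: "u * m + v * gcd k t = gcd m (gcd k t)" using bezout_int by blast
  obtain u' v' where uv': "u' * k + v' * t = gcd k t" using bezout_int by blast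
  have "u * m + v * (u' * k + v' * t) = gcd m (gcd k t)" using uv unfolding uv' .
  hence e1: "u * m + v * (u' * k + v' * t) = 1" using h1 unfolding h_def by simp
  have one: "u * m + (v * u') * k + (v * v') * t = 1"
    using e1 by (simp add: algebra_simps)
  have gmem: "of_int g \<in> mul A (cnj ` A)"
  proof -
    have "(of_int g :: complex) = of_int g * of_int (u * m + (v * u') * k + (v * v') * t)" using one by simp
    also have "\<dots> = (of_int u * \<alpha>) * \<alpha> + (of_int (v * u') * \<beta>) * \<beta>c
                     + (of_int (v * v') * \<alpha>) * \<beta>c + (of_int (v * v') * \<beta>) * \<alpha>"
    proof -
      have "(of_int u * \<alpha>) * \<alpha> + (of_int (v * u') * \<beta>) * \<beta>c + (of_int (v * v') * \<alpha>) * \<beta>c + (of_int (v * v') * \<beta>) * \<alpha>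
            = of_int u * (\<alpha> * \<alpha>) + of_int (v * u') * (\<beta> * \<beta>c) + of_int (v * v') * (\<alpha> * \<beta>c) + of_int (v * v') * (\<beta> * \<alpha>)"
        by (simp add: algebra_simps)
      also have "\<dots> = of_int g * of_int (u * m + (v * u') * k + (v * v') * t)"
        unfolding I1 I2 I3 I4 t_def by (simp add: algebra_simps)
      finally show ?thesis by simp
    qed
    also have "\<dots> \<in> mul A (cnj ` A)"
    proof -
      have a1: "of_int u * \<alpha> \<in> A" using memA[of u 0] by simp
      have a2: "of_int (v * u') * \<beta> \<in> A" using memA[of 0 "v * u'"] by simp
      have a3: "of_int (v * v') * \<alpha> \<in> A" using memA[of "v * v'" 0] by simp
      have a4: "of_int (v * v') * \<beta> \<in> A" using memA[of 0 "v * v'"] by simp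
      have c1: "\<alpha> \<in> cnj ` A" using memC[of 1 0] by simp
      have c2: "\<beta>c \<in> cnj ` A" using memC[of 0 1] by simp
      show ?thesis by (intro mul_add mul_mem a1 a2 a3 a4 c1 c2)
    qed
    finally show ?thesis .
  qed
  have sub2: "sc (of_int g) RR \<subseteq> mul A (cnj ` A)"
  proof
    fix z assume "z \<in> sc (of_int g) RR"
    then obtain r where r: "r \<in> RR" "z = of_int g * r" unfolding sc_def by blast
    have "r * of_int g \<in> mul A (cnj ` A)"
      by (rule mul_lmult[OF _ gmem]) (rule id_rmult[OF A r(1)])
    thus "z \<in> mul A (cnj ` A)" using r(2) by (simp add: mult.commute)
  qed
  show ?thesis unfolding NAg using sub1 sub2 by blast
qed
end



context qf begin

lemma norm_pos: "nonzero_ideal RR A \<Longrightarrow> ideal_norm RR A \<ge> 1"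
proof -
  assume A: "nonzero_ideal RR A"
  obtain c m b0 :: int where cm: "c > 0" "m > 0" and e: "ideal_norm RR A = nat (c * c * m)"
    using hnf[OF A] by metis
  have "0 < c * c * m" using cm by (simp add: zero_less_mult_iff)
  hence h: "1 \<le> c * c * m" by simp
  show ?thesis unfolding e using h by (subst le_nat_iff) simp_all
qed

lemma short_vec:
  assumes A: "nonzero_ideal RR A"
  shows "\<exists>\<gamma>\<in>A. \<gamma> \<noteq> 0 \<and> cmod \<gamma> ^ 2 \<le> 4 * (1 + sd) ^ 2 * real (ideal_norm RR A)"
proof -
  define N where "N = ideal_norm RR A"
  have N1: "N \<ge> 1" unfolding N_def using norm_pos[OF A] .
  define cs where "cs x = (\<lambda>c. x + c) ` A" for x
  have fin: "finite (cs ` RR)" using N1 unfolding N_def ideal_norm_def cs_def by (metis card.infinite not_one_le_zero)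
  have cardN: "card (cs ` RR) = N" unfolding N_def ideal_norm_def cs_def by simp
  define k :: int where "k = \<lceil>sqrt (real N)\<rceil>"
  have k1: "of_int k \<ge> sqrt (real N)" unfolding k_def by linarith
  have k2: "of_int k \<le> sqrt (real N) + 1" unfolding k_def by linarith
  have sN: "sqrt (real N) \<ge> 1" using N1 by simp
  have k0: "k \<ge> 1" using k1 sN by linarith
  define P where "P = {0..k} \<times> {0..k}"
  define f where "f = (\<lambda>(i::int, j::int). of_int i + of_int j * th)"
  have finj: "inj_on f P"
  proof (rule inj_onI)
    fix p q assume "p \<in> P" "q \<in> P" and e: "f p = f q"
    obtain i j where p: "p = (i, j)" by (cases p)
    obtain i' j' where q: "q = (i', j')" by (cases q)
    have e': "of_int i + of_int j * th = of_int i' + of_int j' * th" using e unfolding p q f_def by simp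
    have "Im (of_int i + of_int j * th) = Im (of_int i' + of_int j' * th)" using e' by simp
    hence "of_int j * sd = of_int j' * sd" by simp
    hence jj: "j = j'" using sd_pos by simp
    have "Re (of_int i + of_int j * th) = Re (of_int i' + of_int j' * th)" using e' by simp
    hence "i = i'" by simp
    thus "p = q" using jj unfolding p q by simp
  qed
  have cardP: "card P = nat (k + 1) * nat (k + 1)" unfolding P_def by (simp add: card_cartesian_product)
  have "(sqrt (real N)) ^ 2 \<le> (of_int k) ^ 2" by (rule power_mono[OF k1]) simp
  hence "real N \<le> (of_int k) ^ 2" by simp
  hence "real N < real (card P)"
  proof -
    assume h: "real N \<le> (of_int k) ^ 2"
    have "(of_int k :: real) ^ 2 < of_int ((k + 1) * (k + 1))" using k0 by (simp add: power2_eq_square algebra_simps)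
    also have "\<dots> = real (card P)" unfolding cardP using k0 by (simp add: nat_mult_distrib[symmetric])
    finally show ?thesis using h by linarith
  qed
  hence NP: "N < card P" by simp
  have fR: "f ` P \<subseteq> RR"
  proof
    fix z assume "z \<in> f ` P"
    then obtain i j where "z = of_int i + of_int j * th" unfolding f_def by auto
    thus "z \<in> RR" using R_th by (simp add: R_add R_mult)
  qed
  have "card ((cs \<circ> f) ` P) \<le> card (cs ` RR)"
    using fR fin by (intro card_mono) auto
  hence "card ((cs \<circ> f) ` P) < card P" using NP cardN by simp
  hence "\<not> inj_on (cs \<circ> f) P" by (rule pigeonhole)
  then obtain p q where pq: "p \<in> P" "q \<in> P" "p \<noteq> q" "cs (f p) = cs (f q)"
    unfolding inj_on_def by auto
  have mem: "f p - f q \<in> A" using pq(4) coset_eq[OF A, of "f p" "f q"] unfolding cs_def by simp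
  have nz: "f p - f q \<noteq> 0" using finj pq(1-3) unfolding inj_on_def by auto
  obtain i j where p: "p = (i, j)" by (cases p)
  obtain i' j' where q: "q = (i', j')" by (cases q)
  have b: "\<bar>i - i'\<bar> \<le> k" "\<bar>j - j'\<bar> \<le> k" using pq(1,2) unfolding p q P_def by auto
  have fe: "f p - f q = of_int (i - i') + of_int (j - j') * th" unfolding f_def p q by (simp add: algebra_simps)
  have "cmod (f p - f q) \<le> cmod (of_int (i - i') :: complex) + cmod (of_int (j - j') * th)"
    unfolding fe by (rule norm_triangle_ineq)
  also have "\<dots> = \<bar>of_int (i - i')\<bar> + \<bar>of_int (j - j')\<bar> * sd"
    by (simp add: norm_mult th_def del: of_int_diff)
  also have "\<dots> \<le> of_int k + of_int k * sd"
    using b sd_pos by (intro add_mono mult_right_mono) (simp_all del: of_int_diff add: abs_le_iff)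
  finally have c1: "cmod (f p - f q) \<le> of_int k * (1 + sd)" by (simp add: algebra_simps)
  have "of_int k \<le> 2 * sqrt (real N)" using k2 sN by linarith
  hence "cmod (f p - f q) \<le> 2 * sqrt (real N) * (1 + sd)"
  proof -
    have "of_int k * (1 + sd) \<le> 2 * sqrt (real N) * (1 + sd)"
      using \<open>of_int k \<le> 2 * sqrt (real N)\<close> sd_pos by (intro mult_right_mono) simp_all
    thus ?thesis using c1 by linarith
  qed
  hence "cmod (f p - f q) ^ 2 \<le> (2 * sqrt (real N) * (1 + sd)) ^ 2"
    by (intro power_mono) simp_all
  also have "\<dots> = 4 * (1 + sd) ^ 2 * real N" by (simp add: power_mult_distrib)
  finally show ?thesis using mem nz unfolding N_def by blast
qed


lemma cnj_sc: "cnj ` sc a X = sc (cnj a) (cnj ` X)"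
  unfolding sc_def by (auto simp: image_image)

lemma mul_sc_sc: "mul (sc a X) (sc b Y) = sc (a * b) (mul X Y)"
  by (simp add: mul_sc sc_mul_right sc_sc mult.commute)

lemma dense_pt:
  assumes J0: "0 \<in> J" and Jadd: "\<And>x y. x \<in> J \<Longrightarrow> y \<in> J \<Longrightarrow> x + y \<in> J"
    and Jm: "\<And>r x. r \<in> RR \<Longrightarrow> x \<in> J \<Longrightarrow> r * x \<in> J"
    and Jnz: "x1 \<in> J" "x1 \<noteq> 0"
    and c0: "c0 \<in> RR" "c0 \<noteq> 0" "\<And>x. x \<in> J \<Longrightarrow> c0 * x \<in> RR"
    and q: "q > 0" "mul J (cnj ` J) = sc (of_real q) RR"
  shows "\<exists>x\<in>J. cmod (p - x) \<le> (1 + sd) ^ 2 * sqrt q"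
proof -
  define A where "A = sc c0 J"
  have A: "nonzero_ideal RR A"
    unfolding nonzero_ideal_def
  proof (intro conjI ballI)
    show "A \<subseteq> RR" unfolding A_def sc_def using c0(3) by auto
    show "0 \<in> A" unfolding A_def sc_def using J0 by (metis image_eqI mult_zero_right)
    show "A \<noteq> {0}"
    proof
      assume "A = {0}"
      moreover have "c0 * x1 \<in> A" unfolding A_def sc_def using Jnz(1) by blast
      ultimately show False using c0(2) Jnz(2) by simp
    qed
    show "x + y \<in> A" if "x \<in> A" "y \<in> A" for x y
    proof -
      obtain x' y' where "x' \<in> J" "y' \<in> J" "x = c0 * x'" "y = c0 * y'"
        using \<open>x \<in> A\<close> \<open>y \<in> A\<close> unfolding A_def sc_def by blast
      thus ?thesis unfolding A_def sc_def using Jadd by (metis distrib_left image_eqI)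
    qed
    show "r * x \<in> A" if "r \<in> RR" "x \<in> A" for r x
    proof -
      obtain x' where "x' \<in> J" "x = c0 * x'" using \<open>x \<in> A\<close> unfolding A_def sc_def by blast
      thus ?thesis unfolding A_def sc_def using Jm[OF \<open>r \<in> RR\<close>] by (metis image_eqI mult.left_commute)
    qed
  qed
  define N where "N = ideal_norm RR A"
  have N1: "N \<ge> 1" unfolding N_def using norm_pos[OF A] .
  have "mul A (cnj ` A) = sc (c0 * cnj c0) (mul J (cnj ` J))"
    unfolding A_def cnj_sc mul_sc_sc ..
  also have "\<dots> = sc (complex_of_real (cmod c0 ^ 2 * q)) RR"
  proof -
    have e: "c0 * cnj c0 = complex_of_real (cmod c0 ^ 2)" by (rule complex_norm_square[symmetric])
    show ?thesis by (simp only: q(2) sc_sc e of_real_mult[symmetric])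
  qed
  finally have e1: "mul A (cnj ` A) = sc (complex_of_real (cmod c0 ^ 2 * q)) RR" .
  have e2: "mul A (cnj ` A) = sc (complex_of_real (real N)) RR" unfolding hurwitz[OF A] N_def by simp
  have Nq: "real N = cmod c0 ^ 2 * q"
    using sc_RR_inj[of "real N" "cmod c0 ^ 2 * q"] e1 e2 N1 q(1) c0(2) by simp
  obtain \<gamma> where g: "\<gamma> \<in> A" "\<gamma> \<noteq> 0" "cmod \<gamma> ^ 2 \<le> 4 * (1 + sd) ^ 2 * real N"
    using short_vec[OF A] unfolding N_def by blast
  obtain x0 where x0: "x0 \<in> J" "\<gamma> = c0 * x0" using g(1) unfolding A_def sc_def by blast
  have x0nz: "x0 \<noteq> 0" using g(2) x0(2) by simp
  have c0p: "cmod c0 ^ 2 > 0" using c0(2) by simp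
  have "cmod c0 ^ 2 * cmod x0 ^ 2 \<le> cmod c0 ^ 2 * (4 * (1 + sd) ^ 2 * q)"
    using g(3) unfolding x0(2) Nq by (simp add: norm_mult power_mult_distrib algebra_simps)
  hence "cmod x0 ^ 2 \<le> 4 * (1 + sd) ^ 2 * q" using c0p by simp
  hence "sqrt (cmod x0 ^ 2) \<le> sqrt (4 * (1 + sd) ^ 2 * q)" by (rule real_sqrt_le_mono)
  hence cx0: "cmod x0 \<le> 2 * (1 + sd) * sqrt q" using sd_pos by (simp add: real_sqrt_mult)
  define z where "z = p / x0"
  define a where "a = \<lfloor>Re z + 1/2\<rfloor>"
  define b where "b = \<lfloor>Im z / sd + 1/2\<rfloor>"
  define u where "u = of_int a + of_int b * th"
  have uR: "u \<in> RR" unfolding u_def using R_th by (simp add: R_add R_mult)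
  have ra: "\<bar>Re z - of_int a\<bar> \<le> 1/2" unfolding a_def by linarith
  have rb: "\<bar>Im z / sd - of_int b\<bar> \<le> 1/2" unfolding b_def by linarith
  have se: "sd * (Im z / sd - of_int b) = Im z - of_int b * sd" using sd_pos by (simp add: algebra_simps)
  have "\<bar>Im z - of_int b * sd\<bar> = \<bar>sd * (Im z / sd - of_int b)\<bar>" unfolding se ..
  also have "\<dots> = sd * \<bar>Im z / sd - of_int b\<bar>" using sd_pos by (simp add: abs_mult)
  also have "\<dots> \<le> sd * (1/2)" using rb sd_pos by (intro mult_left_mono) simp_all
  finally have rb': "\<bar>Im z - of_int b * sd\<bar> \<le> sd / 2" by simp
  have "cmod (z - u) \<le> \<bar>Re (z - u)\<bar> + \<bar>Im (z - u)\<bar>" by (rule cmod_le)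
  also have "\<dots> = \<bar>Re z - of_int a\<bar> + \<bar>Im z - of_int b * sd\<bar>" unfolding u_def by (simp add: th_def)
  also have "\<dots> \<le> (1 + sd) / 2" using ra rb' by simp
  finally have czu: "cmod (z - u) \<le> (1 + sd) / 2" .
  have px: "p - x0 * u = x0 * (z - u)" unfolding z_def using x0nz by (simp add: algebra_simps)
  have "cmod (p - x0 * u) = cmod x0 * cmod (z - u)" unfolding px by (simp add: norm_mult)
  also have "\<dots> \<le> (2 * (1 + sd) * sqrt q) * ((1 + sd) / 2)"
    using cx0 czu sd_pos q(1) by (intro mult_mono) simp_all
  also have "\<dots> = (1 + sd) ^ 2 * sqrt q" by (simp add: power2_eq_square)
  finally have "cmod (p - x0 * u) \<le> (1 + sd) ^ 2 * sqrt q" .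
  moreover have "x0 * u \<in> J" using Jm[OF uR x0(1)] by (simp add: mult.commute)
  ultimately show ?thesis by blast
qed
end



lemma div_img: "(\<lambda>z. z / w) ` X = sc (inverse w) X"
  unfolding sc_def by (rule image_cong) (simp_all add: divide_inverse mult.commute)

lemma mul_rearr: "mul (mul A B) (mul A' B') = mul (mul A A') (mul B B')"
proof -
  have "mul (mul A B) (mul A' B') = mul A (mul B (mul A' B'))" by (rule mul_assoc)
  also have "\<dots> = mul A (mul (mul B A') B')" by (simp only: mul_assoc)
  also have "\<dots> = mul A (mul (mul A' B) B')" by (simp only: mul_comm[of B A'])
  also have "\<dots> = mul A (mul A' (mul B B'))" by (simp only: mul_assoc)
  also have "\<dots> = mul (mul A A') (mul B B')" by (simp only: mul_assoc)
  finally show ?thesis .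
qed

context qf begin

lemma main:
  assumes C: "nonzero_ideal RR C"
    and S: "\<exists>S. open S \<and> S \<noteq> {} \<and> S \<subseteq> - (\<Union>c\<in>C. ball c (sqrt (real (ideal_norm RR C))))"
  shows "\<not> euclidean_ideal KK RR C"
proof
  assume "euclidean_ideal KK RR C"
  then obtain \<psi> :: "complex set \<Rightarrow> nat" where psi:
    "\<And>I. fractional_ideal KK RR I \<and> RR \<subseteq> I \<Longrightarrow>
       (\<forall>x \<in> mul I C - C. \<exists>y \<in> C. \<psi> ((\<lambda>z. z / (x + y)) ` mul I C) < \<psi> I)"
    unfolding euclidean_ideal_def by blast
  define N where "N = ideal_norm RR C"
  have N1: "N \<ge> 1" unfolding N_def using norm_pos[OF C] .
  have sN: "sqrt (real N) \<ge> 1" using N1 by simp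
  have hC: "mul C (cnj ` C) = sc (of_nat N) RR" unfolding N_def by (rule hurwitz[OF C])
  obtain S where S: "open S" "S \<noteq> {}" "S \<subseteq> - (\<Union>c\<in>C. ball c (sqrt (real N)))"
    using S unfolding N_def by blast
  obtain p where pS: "p \<in> S" using S(2) by blast
  obtain r where r0: "r > 0" and rS: "ball p r \<subseteq> S" using S(1) pS openE by blast
  have far: "sqrt (real N) \<le> dist c x" if "x \<in> ball p r" "c \<in> C" for x c
  proof -
    have "x \<notin> ball c (sqrt (real N))" using that rS S(3) by blast
    thus ?thesis by simp
  qed
  define \<epsilon> where "\<epsilon> = (r / (2 * (1 + sd) ^ 2)) ^ 2"
  have sd1: "1 + sd > 0" using sd_pos by linarith
  hence sdp: "(1 + sd) ^ 2 > 0" by simp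
  have \<epsilon>0: "\<epsilon> > 0" unfolding \<epsilon>_def using r0 sdp by simp
  have small: "(1 + sd) ^ 2 * sqrt q < r" if "0 < q" "q \<le> \<epsilon>" for q
  proof -
    have "sqrt q \<le> sqrt \<epsilon>" using that by simp
    also have "sqrt \<epsilon> = r / (2 * (1 + sd) ^ 2)" unfolding \<epsilon>_def using r0 sdp by simp
    finally have "(1 + sd) ^ 2 * sqrt q \<le> (1 + sd) ^ 2 * (r / (2 * (1 + sd) ^ 2))"
      using sdp by (intro mult_left_mono) simp_all
    also have "\<dots> = r / 2" using sdp by simp
    finally show ?thesis using r0 by simp
  qed
  have CR: "C \<subseteq> RR" using id_sub[OF C] .
  obtain x1 where x1: "x1 \<in> C" "x1 \<noteq> 0" using id_nz[OF C] by blast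
  have mulRC: "mul RR C = C"
    by (rule R_mul_ideal) (use C in \<open>auto intro: id_0 id_add id_rmult\<close>)
  define Pr where "Pr I \<longleftrightarrow> fractional_ideal KK RR I \<and> RR \<subseteq> I \<and>
      (\<exists>q. 0 < q \<and> q \<le> \<epsilon> \<and> mul (mul I C) (cnj ` mul I C) = sc (of_real q) RR)" for I
  have step: "\<exists>x \<in> mul I C - C. \<forall>y\<in>C. Pr ((\<lambda>z. z / (x + y)) ` mul I C)" if PI: "Pr I" for I
  proof -
    have FI: "fractional_ideal KK RR I" and RI: "RR \<subseteq> I" using PI unfolding Pr_def by blast+
    obtain q where q: "0 < q" "q \<le> \<epsilon>" "mul (mul I C) (cnj ` mul I C) = sc (of_real q) RR"
      using PI unfolding Pr_def by blast
    have IK: "I \<subseteq> KK" and Iadd: "\<And>x y. x \<in> I \<Longrightarrow> y \<in> I \<Longrightarrow> x + y \<in> I"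
      and Imul: "\<And>r x. r \<in> RR \<Longrightarrow> x \<in> I \<Longrightarrow> r * x \<in> I"
      using FI unfolding fractional_ideal_def by blast+
    obtain c0 where c0: "c0 \<in> RR" "c0 \<noteq> 0" "(\<lambda>x. c0 * x) ` I \<subseteq> RR"
      using FI unfolding fractional_ideal_def by blast
    define Jm where "Jm = mul I C"
    have J0: "0 \<in> Jm" unfolding Jm_def by (rule mul_0)
    have Jadd: "x + y \<in> Jm" if "x \<in> Jm" "y \<in> Jm" for x y using that unfolding Jm_def by (rule mul_add)
    have JRm: "r * x \<in> Jm" if "r \<in> RR" "x \<in> Jm" for r x
    proof -
      have "\<And>z. z \<in> I \<Longrightarrow> r * z \<in> I" using Imul that(1) by blast
      thus ?thesis using mul_lmult[of I r x C] that(2) unfolding Jm_def by blast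
    qed
    have CJ: "C \<subseteq> Jm"
    proof
      fix c assume "c \<in> C"
      moreover have "1 \<in> I" using RI R_1 by blast
      ultimately show "c \<in> Jm" unfolding Jm_def using mul_mem[of 1 I c C] by simp
    qed
    have JK: "Jm \<subseteq> KK" unfolding Jm_def
    proof (rule mul_induct)
      show "0 \<in> KK" using K_of_int[of 0] by simp
    qed (use IK CR R_K in \<open>auto intro: K_add K_mult\<close>)
    have Jc0: "Jm \<subseteq> {z. c0 * z \<in> RR}" unfolding Jm_def
    proof (rule mul_induct)
      show "0 \<in> {z. c0 * z \<in> RR}" by simp
      show "u + v \<in> {z. c0 * z \<in> RR}" if "u \<in> {z. c0 * z \<in> RR}" "v \<in> {z. c0 * z \<in> RR}" for u v
        using that by (simp add: distrib_left R_add)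
      show "x * y \<in> {z. c0 * z \<in> RR}" if "x \<in> I" "y \<in> C" for x y
      proof -
        have "c0 * x \<in> RR" using c0(3) that(1) by blast
        moreover have "y \<in> RR" using CR that(2) by blast
        ultimately show ?thesis by (simp add: mult.assoc[symmetric] R_mult)
      qed
    qed
    obtain x where xJ: "x \<in> Jm" and xp: "cmod (p - x) \<le> (1 + sd) ^ 2 * sqrt q"
      using dense_pt[OF J0 Jadd JRm _ _ c0(1,2) _ q(1) q(3)[folded Jm_def], of x1 p] CJ x1 Jc0
      by blast
    have xb: "x \<in> ball p r" using xp small[OF q(1,2)] by (simp add: dist_norm)
    have xC: "x \<notin> C"
    proof
      assume "x \<in> C" hence "sqrt (real N) \<le> dist x x" using far[OF xb] by blast
      thus False using sN by simp
    qed
    have "\<forall>y\<in>C. Pr ((\<lambda>z. z / (x + y)) ` mul I C)"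
    proof
      fix y assume yC: "y \<in> C"
      define w where "w = x + y"
      have "- y \<in> C" using id_neg[OF C yC] .
      hence "sqrt (real N) \<le> dist (- y) x" using far[OF xb] by blast
      hence wN: "sqrt (real N) \<le> cmod w" unfolding w_def dist_norm by (simp add: norm_minus_commute add.commute)
      have w0: "w \<noteq> 0" using wN sN by auto
      have wJ: "w \<in> Jm" unfolding w_def using Jadd[OF xJ] CJ yC by blast
      have wK: "w \<in> KK" using wJ JK by blast
      define I' where "I' = sc (inverse w) Jm"
      have I'eq: "(\<lambda>z. z / (x + y)) ` mul I C = I'" unfolding I'_def Jm_def w_def div_img ..
      have F': "fractional_ideal KK RR I'"
        unfolding fractional_ideal_def
      proof (intro conjI ballI)
        show "I' \<subseteq> KK" unfolding I'_def sc_def using JK K_inverse[OF wK] K_mult by blast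
        show "0 \<in> I'" unfolding I'_def sc_def using J0 by (metis image_eqI mult_zero_right)
        show "I' \<noteq> {0}"
        proof
          assume "I' = {0}"
          moreover have "inverse w * w \<in> I'" unfolding I'_def sc_def using wJ by blast
          ultimately show False using w0 by simp
        qed
        show "a + b \<in> I'" if ha: "a \<in> I'" and hb: "b \<in> I'" for a b
        proof -
          obtain a' b' where "a' \<in> Jm" "b' \<in> Jm" "a = inverse w * a'" "b = inverse w * b'"
            using ha hb unfolding I'_def sc_def by blast
          thus ?thesis unfolding I'_def sc_def using Jadd by (metis distrib_left image_eqI)
        qed
        show "r * a \<in> I'" if hr: "r \<in> RR" and ha: "a \<in> I'" for r a
        proof -
          obtain a' where "a' \<in> Jm" "a = inverse w * a'" using ha unfolding I'_def sc_def by blast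
          thus ?thesis unfolding I'_def sc_def using JRm[OF hr] by (metis image_eqI mult.left_commute)
        qed
        define u where "u = c0 * w"
        have uR: "u \<in> RR" unfolding u_def using Jc0 wJ by blast
        have u0: "u \<noteq> 0" unfolding u_def using c0(2) w0 by simp
        show "\<exists>cc\<in>RR. cc \<noteq> 0 \<and> (\<lambda>z. cc * z) ` I' \<subseteq> RR"
        proof (intro bexI conjI)
          show "u * cnj u \<in> RR" using uR by (intro R_mult R_cnj)
          show "u * cnj u \<noteq> 0" using u0 by simp
          show "(\<lambda>z. u * cnj u * z) ` I' \<subseteq> RR"
          proof
            fix z assume "z \<in> (\<lambda>z. u * cnj u * z) ` I'"
            then obtain a where a: "a \<in> Jm" "z = u * cnj u * (inverse w * a)" unfolding I'_def sc_def by blast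
            have "z = cnj u * (c0 * a)" unfolding a(2) u_def using w0 by (simp add: field_simps)
            moreover have "c0 * a \<in> RR" using Jc0 a(1) by blast
            ultimately show "z \<in> RR" using uR by (simp add: R_mult R_cnj)
          qed
        qed
      qed
      have R': "RR \<subseteq> I'"
      proof
        fix r assume "r \<in> RR"
        hence "r * w \<in> Jm" using JRm wJ by blast
        moreover have "r = inverse w * (r * w)" using w0 by simp
        ultimately show "r \<in> I'" unfolding I'_def sc_def by blast
      qed
      define q' where "q' = q * real N / cmod w ^ 2"
      have cw0: "cmod w ^ 2 > 0" using w0 by simp
      have Nw: "real N \<le> cmod w ^ 2"
      proof -
        have "sqrt (real N) ^ 2 \<le> cmod w ^ 2" using wN sN by (intro power_mono) simp_all
        thus ?thesis by simp
      qed
      have q'0: "q' > 0" unfolding q'_def using q(1) N1 cw0 by simp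
      have q'le: "q' \<le> q"
      proof -
        have "q * real N \<le> q * cmod w ^ 2" using Nw q(1) by (intro mult_left_mono) simp_all
        thus ?thesis unfolding q'_def using cw0 by (simp add: divide_le_eq)
      qed
      have "mul (mul I' C) (cnj ` mul I' C) = sc (inverse w * cnj (inverse w)) (mul (mul Jm C) (cnj ` mul Jm C))"
        by (simp only: I'_def mul_sc cnj_sc sc_mul_right sc_sc mult.commute)
      also have "mul (mul Jm C) (cnj ` mul Jm C) = mul (mul Jm (cnj ` Jm)) (mul C (cnj ` C))"
        unfolding mul_cnj mul_rearr ..
      also have "\<dots> = sc (of_real q * of_nat N) RR" unfolding hC q(3)[folded Jm_def] sc_RR_mul ..
      also have "sc (inverse w * cnj (inverse w)) (sc (of_real q * of_nat N) RR) = sc (of_real q') RR"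
      proof -
        have "inverse w * cnj (inverse w) = complex_of_real (1 / cmod w ^ 2)"
          using complex_norm_square[of "inverse w"] by (simp add: norm_inverse power_inverse divide_inverse)
        hence "inverse w * cnj (inverse w) * (of_real q * of_nat N) = complex_of_real q'"
          unfolding q'_def by simp
        thus ?thesis unfolding sc_sc by simp
      qed
      finally have e': "mul (mul I' C) (cnj ` mul I' C) = sc (of_real q') RR" .
      show "Pr ((\<lambda>z. z / (x + y)) ` mul I C)"
        unfolding I'eq Pr_def using F' R' e' q'0 q'le q(2) by (intro conjI exI[of _ q']) auto
    qed
    thus ?thesis using xJ xC unfolding Jm_def by blast
  qed
  have init: "\<exists>I. Pr I"
  proof -
    define s :: nat where "s = nat \<lceil>sqrt (real N / \<epsilon>)\<rceil> + 1"
    have s0: "s > 0" unfolding s_def by simp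
    have ss: "real s > sqrt (real N / \<epsilon>)" unfolding s_def by linarith
    define iv :: complex where "iv = inverse (of_nat s)"
    define I0 where "I0 = sc iv RR"
    have ivK: "iv \<in> KK" unfolding iv_def using K_inverse[OF K_of_int[of "int s"]] by simp
    have iv0: "iv \<noteq> 0" unfolding iv_def using s0 by simp
    have F0: "fractional_ideal KK RR I0"
      unfolding fractional_ideal_def
    proof (intro conjI ballI)
      show "I0 \<subseteq> KK" unfolding I0_def sc_def using ivK R_K K_mult by blast
      show "0 \<in> I0" unfolding I0_def sc_def using R_0 by (metis image_eqI mult_zero_right)
      show "I0 \<noteq> {0}"
      proof
        assume "I0 = {0}"
        moreover have "iv * 1 \<in> I0" unfolding I0_def sc_def using R_1 by blast
        ultimately show False using iv0 by simp
      qed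
      show "a + b \<in> I0" if ha: "a \<in> I0" and hb: "b \<in> I0" for a b
      proof -
        obtain a' b' where "a' \<in> RR" "b' \<in> RR" "a = iv * a'" "b = iv * b'"
          using ha hb unfolding I0_def sc_def by blast
        thus ?thesis unfolding I0_def sc_def using R_add by (metis distrib_left image_eqI)
      qed
      show "r * a \<in> I0" if hr: "r \<in> RR" and ha: "a \<in> I0" for r a
      proof -
        obtain a' where "a' \<in> RR" "a = iv * a'" using ha unfolding I0_def sc_def by blast
        thus ?thesis unfolding I0_def sc_def using R_mult[OF hr] by (metis image_eqI mult.left_commute)
      qed
      show "\<exists>cc\<in>RR. cc \<noteq> 0 \<and> (\<lambda>z. cc * z) ` I0 \<subseteq> RR"
      proof (intro bexI conjI)
        show "of_nat s \<in> RR" using R_of_int[of "int s"] by simp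
        show "(of_nat s :: complex) \<noteq> 0" using s0 by simp
        show "(\<lambda>z. of_nat s * z) ` I0 \<subseteq> RR"
        proof
          fix z assume "z \<in> (\<lambda>z. of_nat s * z) ` I0"
          then obtain a where a: "a \<in> RR" "z = of_nat s * (iv * a)" unfolding I0_def sc_def by blast
          have "z = a" unfolding a(2) iv_def using s0 by (simp add: mult.assoc[symmetric])
          thus "z \<in> RR" using a(1) by simp
        qed
      qed
    qed
    have R0: "RR \<subseteq> I0"
    proof
      fix r assume "r \<in> RR"
      hence "of_nat s * r \<in> RR" using R_mult R_of_int[of "int s"] by simp
      moreover have "r = iv * (of_nat s * r)" unfolding iv_def using s0 by simp
      ultimately show "r \<in> I0" unfolding I0_def sc_def by blast
    qed
    define q0 where "q0 = real N / (real s) ^ 2"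
    have q00: "q0 > 0" unfolding q0_def using N1 s0 by simp
    have "sqrt (real N / \<epsilon>) ^ 2 \<le> real s ^ 2" using ss \<epsilon>0 by (intro power_mono) simp_all
    hence "real N / \<epsilon> \<le> real s ^ 2" using N1 \<epsilon>0 by simp
    hence q0le: "q0 \<le> \<epsilon>" unfolding q0_def using \<epsilon>0 s0 by (simp add: field_simps)
    have "mul (mul I0 C) (cnj ` mul I0 C) = sc (iv * cnj iv) (mul C (cnj ` C))"
      by (simp only: I0_def mul_sc mulRC cnj_sc sc_mul_right sc_sc mult.commute)
    also have "\<dots> = sc (of_real q0) RR"
    proof -
      have "iv * cnj iv * of_nat N = complex_of_real q0"
        unfolding iv_def q0_def by (simp add: power2_eq_square field_simps)
      thus ?thesis unfolding hC sc_sc by simp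
    qed
    finally have "mul (mul I0 C) (cnj ` mul I0 C) = sc (of_real q0) RR" .
    hence "Pr I0" unfolding Pr_def using F0 R0 q00 q0le by blast
    thus ?thesis by blast
  qed
  then obtain I0 where "Pr I0" by blast
  then obtain I where PI: "Pr I" and minI: "\<And>I'. Pr I' \<Longrightarrow> \<psi> I \<le> \<psi> I'"
    using ex_has_least_nat[of Pr I0 \<psi>] by blast
  obtain x where x: "x \<in> mul I C - C" and allP: "\<forall>y\<in>C. Pr ((\<lambda>z. z / (x + y)) ` mul I C)"
    using step[OF PI] by blast
  have "fractional_ideal KK RR I \<and> RR \<subseteq> I" using PI unfolding Pr_def by blast
  then obtain y where y: "y \<in> C" "\<psi> ((\<lambda>z. z / (x + y)) ` mul I C) < \<psi> I"
    using psi x by blast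
  have "\<psi> I \<le> \<psi> ((\<lambda>z. z / (x + y)) ` mul I C)" using minI allP y(1) by blast
  thus False using y(2) by simp
qed

end

theorem proposition3p1:
  fixes d :: nat and C :: "complex set"
  defines "K \<equiv> quad_field d"
  defines "OK \<equiv> ring_of_integers (quad_field d)"
  assumes "d > 0"
    and "units_of_ring OK = {1, -1}"
    and "nonzero_ideal OK C"
    and "\<exists>S. open S \<and> S \<noteq> {} \<and>
           S \<subseteq> - (\<Union>c\<in>C. ball c (sqrt (real (ideal_norm OK C))))"
  shows "\<not> euclidean_ideal K OK C"
proof -
  interpret qf d by unfold_locales (rule \<open>d > 0\<close>)
  have C: "nonzero_ideal (ring_of_integers (quad_field d)) C"
    using \<open>nonzero_ideal OK C\<close> unfolding OK_def .
  have S: "\<exists>S. open S \<and> S \<noteq> {} \<and>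
           S \<subseteq> - (\<Union>c\<in>C. ball c (sqrt (real (ideal_norm (ring_of_integers (quad_field d)) C))))"
    using \<open>\<exists>S. open S \<and> S \<noteq> {} \<and> S \<subseteq> - (\<Union>c\<in>C. ball c (sqrt (real (ideal_norm OK C))))\<close>
    unfolding OK_def .
  show ?thesis unfolding K_def OK_def using main[OF C S] .
qed

end
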